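(* Let $1<p<\infty$, let $w,\sigma$ be weights, and let $\mathbb S$ be a positive generalized Haar shift. Let $\mathfrak S_p$ be the smallest constant with $\|1_Q\mathbb S(1_Q\sigma)\|_{L^p(w)}\le\mathfrak S_p\sigma(Q)^{1/p}$ for all dyadic cubes $Q$, and let $\mathfrak N_p$ be the smallest constant such that for every linearization $\mathbb L$ of $\mathbb S_\natural$, every dyadic cube $Q_0$ and every bounded $g$, \[ \Big(\int_{Q_0}\sup_{Q\in\mathscr D,\,Q\subseteq Q_0}1_Q\Big[\frac1{w(Q)}\int_Q|\mathbb L^*(1_Qgw)|\,\sigma\Big]^pw\Big)^{1/p}\le\mathfrak N_p\,\sigma(Q_0)^{1/p}\|g\|_\infty. \] Then $\mathfrak N_p\le C\mathfrak S_p$, with $C$ depending only on $p$.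
   Context: $\mathscr D$: standard dyadic cubes of $\mathbb{R}^d$; $\ell(Q)$ side length. A generalized Haar shift $\mathbb Sf=\sum_{Q\in\mathscr D}\mathbb S_Qf$ has components $\mathbb S_Qf(x)=|Q|^{-1}\int_Qs_Q(x,y)f(y)\,dy$, where $s_Q$ is supported on $Q\times Q$, $\|s_Q\|_\infty\le1$, arising from the standard definition ($\mathbb S_Qf=\sum_{Q',R'}|Q|^{-1}\langle f,h^{Q'}_{R'}\rangle k^{R'}_{Q'}$ over dyadic $Q',R'\subseteq Q$ of side lengths $2^{-m}\ell(Q),2^{-n}\ell(Q)$, with $h^{Q'}_{R'}$, $k^{R'}_{Q'}$ linear combinations of indicators of the dyadic children of $R'$, resp. $Q'$, of sup norm $\le1$, and $\|\mathbb S\|_{L^2\to L^2}\le1$). Positive means $s_Q\ge0$ for all $Q$. Adjoint: $\mathbb S^*g(y)=\sum_Q|Q|^{-1}\int_Qs_Q(x,y)g(x)\,dx$. A linearization of $\mathbb S_\natural$ is $\mathbb Lf(x)=e^{i\vartheta(x)}\sum_{Q\in\mathscr D:\epsilon(x)\le\ell(Q)\le\upsilon(x)}\mathbb S_Qf(x)$ with measurable $\vartheta$ real-valued and $0<\epsilon(x)<\upsilon(x)$; $\mathbb L^*$ is its formal adjoint. Weights are nonnegative locally integrable functions, $w(E)=\int_Ew$ (the ratio is taken as $0$ if $w(Q)=0$). *)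

theory Defs
  imports "HOL-Analysis.Analysis"
begin

type_synonym pt = "nat \<Rightarrow> real"

text \<open>Euclidean space R^d, realised as extensional functions on {..<d} with Lebesgue
  (product Borel) measure.\<close>
definition RdM :: "nat \<Rightarrow> pt measure" where
  "RdM d = PiM {..<d} (\<lambda>_. lborel)"

definition dcube :: "nat \<Rightarrow> int \<Rightarrow> (nat \<Rightarrow> int) \<Rightarrow> pt set" where
  "dcube d k j = {x \<in> space (RdM d). \<forall>i<d.
      of_int (j i) * 2 powr (- of_int k) \<le> x i \<and> x i < (of_int (j i) + 1) * 2 powr (- of_int k)}"

definition dyadic :: "nat \<Rightarrow> pt set set" where
  "dyadic d = {dcube d k j | k j. True}"

definition vol :: "nat \<Rightarrow> pt set \<Rightarrow> real" where
  "vol d Q = measure (RdM d) Q"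

definition dlen :: "nat \<Rightarrow> pt set \<Rightarrow> real" where
  "dlen d Q = vol d Q powr (1 / real d)"

definition dchildren :: "nat \<Rightarrow> pt set \<Rightarrow> pt set set" where
  "dchildren d Q = {Q' \<in> dyadic d. Q' \<subseteq> Q \<and> dlen d Q' = dlen d Q / 2}"

definition shift_pairs :: "nat \<Rightarrow> nat \<Rightarrow> nat \<Rightarrow> pt set \<Rightarrow> (pt set \<times> pt set) set" where
  "shift_pairs d m n Q = {(Q', R'). Q' \<in> dyadic d \<and> Q' \<subseteq> Q \<and> dlen d Q' = dlen d Q / 2 ^ m
      \<and> R' \<in> dyadic d \<and> R' \<subseteq> Q \<and> dlen d R' = dlen d Q / 2 ^ n}"

definition child_comb :: "nat \<Rightarrow> pt set \<Rightarrow> (pt \<Rightarrow> real) \<Rightarrow> bool" where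
  "child_comb d R f \<longleftrightarrow> (\<exists>c. \<forall>y. f y = (\<Sum>R''\<in>dchildren d R. c R'' * indicator R'' y))
      \<and> (\<forall>y. \<bar>f y\<bar> \<le> 1)"

text \<open>Shift data: h Q Q' R' (= h^{Q'}_{R'}) and k Q Q' R' (= k^{R'}_{Q'}).  Kernel s_Q.\<close>
definition skernel :: "nat \<Rightarrow> nat \<Rightarrow> nat
    \<Rightarrow> (pt set \<Rightarrow> pt set \<Rightarrow> pt set \<Rightarrow> pt \<Rightarrow> real)
    \<Rightarrow> (pt set \<Rightarrow> pt set \<Rightarrow> pt set \<Rightarrow> pt \<Rightarrow> real)
    \<Rightarrow> pt set \<Rightarrow> pt \<Rightarrow> pt \<Rightarrow> real" where
  "skernel d m n h k Q x y = (\<Sum>(Q', R')\<in>shift_pairs d m n Q. h Q Q' R' y * k Q Q' R' x)"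

definition scomp :: "nat \<Rightarrow> (pt set \<Rightarrow> pt \<Rightarrow> pt \<Rightarrow> real) \<Rightarrow> pt set \<Rightarrow> (pt \<Rightarrow> real) \<Rightarrow> pt \<Rightarrow> real" where
  "scomp d s Q f x = (1 / vol d Q) * (LINT y:Q|RdM d. s Q x y * f y)"

definition strunc :: "nat \<Rightarrow> (pt set \<Rightarrow> pt \<Rightarrow> pt \<Rightarrow> real) \<Rightarrow> nat \<Rightarrow> (pt \<Rightarrow> real) \<Rightarrow> pt \<Rightarrow> real" where
  "strunc d s N f x = (\<Sum>Q\<in>{Q\<in>dyadic d. x \<in> Q \<and> 2 powr (- real N) \<le> dlen d Q \<and> dlen d Q \<le> 2 powr (real N)}.
      scomp d s Q f x)"

definition L2fun :: "nat \<Rightarrow> (pt \<Rightarrow> real) \<Rightarrow> bool" where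
  "L2fun d f \<longleftrightarrow> f \<in> borel_measurable (RdM d) \<and> integrable (RdM d) (\<lambda>x. (f x)\<^sup>2)"

text \<open>||S||_{L^2 -> L^2} <= 1: for f in L^2, S f = sum_Q S_Q f converges in L^2
  (as limit of the scale truncations) and ||S f||_2 <= ||f||_2.\<close>
definition L2_norm_le_1 :: "nat \<Rightarrow> (pt set \<Rightarrow> pt \<Rightarrow> pt \<Rightarrow> real) \<Rightarrow> bool" where
  "L2_norm_le_1 d s \<longleftrightarrow> (\<forall>f. L2fun d f \<longrightarrow> (\<exists>F. L2fun d F
      \<and> (\<integral>x. (F x)\<^sup>2 \<partial>RdM d) \<le> (\<integral>x. (f x)\<^sup>2 \<partial>RdM d)
      \<and> (\<lambda>N. \<integral>x. (strunc d s N f x - F x)\<^sup>2 \<partial>RdM d) \<longlonglongrightarrow> 0))"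

definition pos_haar_shift :: "nat \<Rightarrow> nat \<Rightarrow> nat
    \<Rightarrow> (pt set \<Rightarrow> pt set \<Rightarrow> pt set \<Rightarrow> pt \<Rightarrow> real)
    \<Rightarrow> (pt set \<Rightarrow> pt set \<Rightarrow> pt set \<Rightarrow> pt \<Rightarrow> real) \<Rightarrow> bool" where
  "pos_haar_shift d m n h k \<longleftrightarrow>
     (\<forall>Q\<in>dyadic d. \<forall>(Q', R')\<in>shift_pairs d m n Q.
        child_comb d R' (h Q Q' R') \<and> child_comb d Q' (k Q Q' R'))
   \<and> L2_norm_le_1 d (skernel d m n h k)
   \<and> (\<forall>Q\<in>dyadic d. \<forall>x y. 0 \<le> skernel d m n h k Q x y)"

definition weight :: "nat \<Rightarrow> (pt \<Rightarrow> real) \<Rightarrow> bool" where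
  "weight d w \<longleftrightarrow> w \<in> borel_measurable (RdM d) \<and> (\<forall>x\<in>space (RdM d). 0 \<le> w x)
     \<and> (\<forall>Q\<in>dyadic d. set_integrable (RdM d) Q w)"

definition wmeas :: "nat \<Rightarrow> (pt \<Rightarrow> real) \<Rightarrow> pt set \<Rightarrow> ennreal" where
  "wmeas d w E = (\<integral>\<^sup>+ x\<in>E. ennreal (w x) \<partial>RdM d)"

text \<open>Real powers on [0,\<infinity>], for positive exponents.\<close>
definition epowr :: "ennreal \<Rightarrow> real \<Rightarrow> ennreal" where
  "epowr x a = (if x = \<infinity> then \<infinity> else ennreal (enn2real x powr a))"

text \<open>S(f sigma) for f >= 0 (positive shift: all terms nonnegative, sum in [0,\<infinity>]).\<close>
definition Spos :: "nat \<Rightarrow> (pt set \<Rightarrow> pt \<Rightarrow> pt \<Rightarrow> real) \<Rightarrow> (pt \<Rightarrow> real) \<Rightarrow> pt \<Rightarrow> ennreal" where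
  "Spos d s f x = (\<Sum>\<^sub>\<infinity>Q\<in>dyadic d.
      (\<integral>\<^sup>+ y\<in>Q. ennreal (s Q x y * f y) \<partial>RdM d) / ennreal (vol d Q))"

definition test_const :: "nat \<Rightarrow> real \<Rightarrow> (pt \<Rightarrow> real) \<Rightarrow> (pt \<Rightarrow> real)
    \<Rightarrow> (pt set \<Rightarrow> pt \<Rightarrow> pt \<Rightarrow> real) \<Rightarrow> ennreal" where
  "test_const d p w \<sigma> s = Inf {A. \<forall>Q\<in>dyadic d.
      epowr (\<integral>\<^sup>+ x\<in>Q. epowr (Spos d s (\<lambda>y. indicator Q y * \<sigma> y) x) p * ennreal (w x) \<partial>RdM d) (1 / p)
        \<le> A * epowr (wmeas d \<sigma> Q) (1 / p)}"

text \<open>Formal adjoint of the linearization L f(x) = e^{i theta(x)} sum_{eps(x)<=l(Q)<=ups(x)} S_Q f(x):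
  L^* g(y) = sum_Q |Q|^-1 int_Q s_Q(x,y) 1[eps(x)<=l(Q)<=ups(x)] e^{-i theta(x)} g(x) dx.\<close>
definition Lstar :: "nat \<Rightarrow> (pt set \<Rightarrow> pt \<Rightarrow> pt \<Rightarrow> real) \<Rightarrow> (pt \<Rightarrow> real) \<Rightarrow> (pt \<Rightarrow> real)
    \<Rightarrow> (pt \<Rightarrow> real) \<Rightarrow> (pt \<Rightarrow> complex) \<Rightarrow> pt \<Rightarrow> complex" where
  "Lstar d s \<theta> \<epsilon> \<upsilon> g y = (\<Sum>\<^sub>\<infinity>Q\<in>dyadic d.
      complex_of_real (1 / vol d Q) * (LINT x:Q|RdM d.
         complex_of_real (s Q x y * indicator {z. \<epsilon> z \<le> dlen d Q \<and> dlen d Q \<le> \<upsilon> z} x)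
         * exp (- \<i> * complex_of_real (\<theta> x)) * g x))"

definition linearization_params :: "nat \<Rightarrow> (pt \<Rightarrow> real) \<Rightarrow> (pt \<Rightarrow> real) \<Rightarrow> (pt \<Rightarrow> real) \<Rightarrow> bool" where
  "linearization_params d \<theta> \<epsilon> \<upsilon> \<longleftrightarrow> \<theta> \<in> borel_measurable (RdM d) \<and> \<epsilon> \<in> borel_measurable (RdM d)
     \<and> \<upsilon> \<in> borel_measurable (RdM d) \<and> (\<forall>x\<in>space (RdM d). 0 < \<epsilon> x \<and> \<epsilon> x < \<upsilon> x)"

definition Lmax :: "nat \<Rightarrow> (pt \<Rightarrow> real) \<Rightarrow> (pt \<Rightarrow> real) \<Rightarrow> (pt set \<Rightarrow> pt \<Rightarrow> pt \<Rightarrow> real)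
    \<Rightarrow> (pt \<Rightarrow> real) \<Rightarrow> (pt \<Rightarrow> real) \<Rightarrow> (pt \<Rightarrow> real) \<Rightarrow> (pt \<Rightarrow> complex) \<Rightarrow> pt set \<Rightarrow> pt \<Rightarrow> ennreal" where
  "Lmax d w \<sigma> s \<theta> \<epsilon> \<upsilon> g Q0 x = (SUP Q\<in>{Q\<in>dyadic d. Q \<subseteq> Q0}.
      indicator Q x * (if wmeas d w Q = 0 then 0 else
        (\<integral>\<^sup>+ y\<in>Q. ennreal (cmod (Lstar d s \<theta> \<epsilon> \<upsilon> (\<lambda>z. indicator Q z * g z * complex_of_real (w z)) y))
                    * ennreal (\<sigma> y) \<partial>RdM d) / wmeas d w Q))"

definition max_const :: "nat \<Rightarrow> real \<Rightarrow> (pt \<Rightarrow> real) \<Rightarrow> (pt \<Rightarrow> real)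
    \<Rightarrow> (pt set \<Rightarrow> pt \<Rightarrow> pt \<Rightarrow> real) \<Rightarrow> ennreal" where
  "max_const d p w \<sigma> s = Inf {A. \<forall>\<theta> \<epsilon> \<upsilon> g Q0.
      linearization_params d \<theta> \<epsilon> \<upsilon> \<and> Q0 \<in> dyadic d
      \<and> g \<in> borel_measurable (RdM d) \<and> bounded (g ` space (RdM d)) \<longrightarrow>
      epowr (\<integral>\<^sup>+ x\<in>Q0. epowr (Lmax d w \<sigma> s \<theta> \<epsilon> \<upsilon> g Q0 x) p * ennreal (w x) \<partial>RdM d) (1 / p)
        \<le> A * epowr (wmeas d \<sigma> Q0) (1 / p) * ennreal (SUP z\<in>space (RdM d). cmod (g z))}"

end

theory Submission
  imports Defs "HOL-Analysis.Analysis"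
begin


lemma space_RdM: "space (RdM d) = PiE {..<d} (\<lambda>_. UNIV)"
  by (simp add: RdM_def space_PiM)

lemma mem_dcube:
  "x \<in> dcube d k j \<longleftrightarrow> x \<in> space (RdM d) \<and> (\<forall>i<d. \<lfloor>x i * 2 powr real_of_int k\<rfloor> = j i)"
proof -
  have t: "0 < (2::real) powr real_of_int k" by simp
  have m: "(2::real) powr (- real_of_int k) = 1 / 2 powr real_of_int k"
    by (simp add: powr_minus_divide)
  have "\<And>i. (of_int (j i) * 2 powr (- of_int k) \<le> x i \<and> x i < (of_int (j i) + 1) * 2 powr (- of_int k))
     \<longleftrightarrow> \<lfloor>x i * 2 powr real_of_int k\<rfloor> = j i"
    unfolding m floor_eq_iff using t
    by (simp add: divide_le_eq pos_less_divide_eq pos_divide_le_eq mult.commute)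
  then show ?thesis unfolding dcube_def by auto
qed

lemma floor_shift:
  fixes y z :: real and k k' :: int
  assumes "k \<le> k'" "\<lfloor>y * 2 powr real_of_int k'\<rfloor> = \<lfloor>z * 2 powr real_of_int k'\<rfloor>"
  shows "\<lfloor>y * 2 powr real_of_int k\<rfloor> = \<lfloor>z * 2 powr real_of_int k\<rfloor>"
proof -
  define n where "n = nat (k' - k)"
  have kk: "real_of_int k' = real_of_int k + real n" using assms(1) by (simp add: n_def)
  have e: "\<And>u::real. u * 2 powr real_of_int k = (u * 2 powr real_of_int k') / real_of_int (2 ^ n)"
    unfolding kk by (simp add: powr_add powr_realpow)
  have f: "\<And>u. \<lfloor>u / real_of_int (2^n)\<rfloor> = \<lfloor>u\<rfloor> div 2^n"
    by (rule floor_divide_real_eq_div) simp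
  show ?thesis unfolding e f using assms(2) by simp
qed

lemma dcube_nest:
  assumes "k \<le> k'" "x \<in> dcube d k j" "x \<in> dcube d k' j'"
  shows "dcube d k' j' \<subseteq> dcube d k j"
proof
  fix y assume y: "y \<in> dcube d k' j'"
  show "y \<in> dcube d k j" unfolding mem_dcube
  proof (intro conjI allI impI)
    show "y \<in> space (RdM d)" using y by (simp add: mem_dcube)
    fix i assume i: "i < d"
    have "\<lfloor>y i * 2 powr real_of_int k'\<rfloor> = \<lfloor>x i * 2 powr real_of_int k'\<rfloor>"
      using y assms(3) i by (simp add: mem_dcube)
    then have "\<lfloor>y i * 2 powr real_of_int k\<rfloor> = \<lfloor>x i * 2 powr real_of_int k\<rfloor>"
      by (rule floor_shift[OF assms(1)])
    then show "\<lfloor>y i * 2 powr real_of_int k\<rfloor> = j i" using assms(2) i by (simp add: mem_dcube)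
  qed
qed

lemma dyadic_nest:
  assumes "Q1 \<in> dyadic d" "Q2 \<in> dyadic d" "Q1 \<inter> Q2 \<noteq> {}"
  shows "Q1 \<subseteq> Q2 \<or> Q2 \<subseteq> Q1"
proof -
  obtain k j where 1: "Q1 = dcube d k j" using assms(1) by (auto simp: dyadic_def)
  obtain k' j' where 2: "Q2 = dcube d k' j'" using assms(2) by (auto simp: dyadic_def)
  obtain x where x: "x \<in> Q1" "x \<in> Q2" using assms(3) by auto
  show ?thesis
  proof (cases "k \<le> k'")
    case True then show ?thesis using dcube_nest[of k k' x d j j'] x 1 2 by auto
  next
    case False then show ?thesis using dcube_nest[of k' k x d j' j] x 1 2 by auto
  qed
qed

definition cpt :: "nat \<Rightarrow> int \<Rightarrow> (nat \<Rightarrow> int) \<Rightarrow> real \<Rightarrow> pt" where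
  "cpt d k j t = (\<lambda>i. if i < d then (if i = 0 then t else of_int (j i) * 2 powr (- of_int k)) else undefined)"

lemma cpt_mem:
  assumes "of_int (j 0) * 2 powr (- of_int k) \<le> t" "t < (of_int (j 0) + 1) * 2 powr (- of_int k)"
  shows "cpt d k j t \<in> dcube d k j"
  unfolding dcube_def cpt_def space_RdM using assms
  by (auto simp: PiE_def extensional_def distrib_right)

lemma dcube_nonempty: "dcube d k j \<noteq> {}"
  using cpt_mem[of j k "of_int (j 0) * 2 powr (- of_int k)" d] by (auto simp: distrib_right)

lemma dcube_level:
  assumes d: "1 \<le> d" and sub: "dcube d k j \<subseteq> dcube d k' j'"
  shows "k' \<le> k"
proof (rule ccontr)
  assume "\<not> k' \<le> k"
  then have kk: "k < k'" by simp
  define a where "a = of_int (j 0) * (2::real) powr (- of_int k)"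
  define L where "L = (2::real) powr (- of_int k)"
  define L' where "L' = (2::real) powr (- of_int k')"
  have LL: "L' < L" unfolding L_def L'_def using kk by simp
  have L'p: "0 < L'" unfolding L'_def by simp
  have "cpt d k j a \<in> dcube d k' j'"
    using sub cpt_mem[of j k a d] unfolding a_def by (auto simp: distrib_right)
  then have 1: "of_int (j' 0) * L' \<le> a" using d unfolding dcube_def cpt_def L'_def by auto
  have "cpt d k j (a + L') \<in> dcube d k' j'"
    using sub cpt_mem[of j k "a + L'" d] LL L'p unfolding a_def L_def by (auto simp: distrib_right)
  then have 2: "a + L' < (of_int (j' 0) + 1) * L'" using d unfolding dcube_def cpt_def L'_def by auto
  from 1 2 show False by (simp add: distrib_right)
qed

lemma dcube_restrict: "dcube d k j = dcube d k (restrict j {..<d})"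
  unfolding dcube_def by auto

lemma dcube_cong: "(\<And>i. i < d \<Longrightarrow> j i = j' i) \<Longrightarrow> dcube d k j = dcube d k j'"
  unfolding dcube_def by auto

lemma countable_dyadic: "countable (dyadic d)"
proof -
  have "dyadic d \<subseteq> (\<lambda>(k, j). dcube d k j) ` (UNIV \<times> PiE {..<d} (\<lambda>_. UNIV))"
  proof
    fix Q assume "Q \<in> dyadic d"
    then obtain k j where "Q = dcube d k j" by (auto simp: dyadic_def)
    then have "Q = (\<lambda>(k, j). dcube d k j) (k, restrict j {..<d})" by (simp add: dcube_restrict[symmetric])
    moreover have "(k, restrict j {..<d}) \<in> UNIV \<times> PiE {..<d} (\<lambda>_. UNIV)" by auto
    ultimately show "Q \<in> (\<lambda>(k, j). dcube d k j) ` (UNIV \<times> PiE {..<d} (\<lambda>_. UNIV))" by blast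
  qed
  moreover have "countable ((UNIV::int set) \<times> PiE {..<d} (\<lambda>_. UNIV::int set))"
    by (intro countable_SIGMA countable_PiE) auto
  ultimately show ?thesis by (meson countable_image countable_subset)
qed

lemma comp_meas[measurable]: "i < d \<Longrightarrow> (\<lambda>x. x i) \<in> borel_measurable (RdM d)"
  using measurable_component_singleton[of i "{..<d}" "\<lambda>_. lborel"]
  unfolding RdM_def by (simp add: measurable_lborel2)

lemma dcube_sets: "dcube d k j \<in> sets (RdM d)"
proof -
  have "dcube d k j = space (RdM d) \<inter> (\<Inter>i\<in>{..<d}. {x\<in>space (RdM d).
      of_int (j i) * 2 powr (- of_int k) \<le> x i \<and> x i < (of_int (j i) + 1) * 2 powr (- of_int k)})"
    unfolding dcube_def by auto
  also have "\<dots> \<in> sets (RdM d)"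
  proof (cases "d = 0")
    case True then show ?thesis by simp
  next
    case False then show ?thesis by (intro sets.Int sets.top sets.finite_INT) auto
  qed
  finally show ?thesis .
qed

lemma dyadic_sets: "Q \<in> dyadic d \<Longrightarrow> Q \<in> sets (RdM d)"
  unfolding dyadic_def using dcube_sets by auto

lemma ancestors_finite:
  assumes d: "1 \<le> d" and Q: "Q \<in> dyadic d" and Q0: "Q0 \<in> dyadic d"
  shows "finite {Q'\<in>dyadic d. Q \<subseteq> Q' \<and> Q' \<subseteq> Q0}"
proof -
  obtain k j where 1: "Q = dcube d k j" using Q by (auto simp: dyadic_def)
  obtain k0 j0 where 2: "Q0 = dcube d k0 j0" using Q0 by (auto simp: dyadic_def)
  obtain x where x: "x \<in> Q" using 1 dcube_nonempty by blast
  have "{Q'\<in>dyadic d. Q \<subseteq> Q' \<and> Q' \<subseteq> Q0} \<subseteq>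
      (\<lambda>k'. dcube d k' (\<lambda>i. \<lfloor>x i * 2 powr real_of_int k'\<rfloor>)) ` {k0..k}"
  proof
    fix Q' assume "Q' \<in> {Q'\<in>dyadic d. Q \<subseteq> Q' \<and> Q' \<subseteq> Q0}"
    then obtain k' j' where Q': "Q' = dcube d k' j'" "Q \<subseteq> Q'" "Q' \<subseteq> Q0" by (auto simp: dyadic_def)
    have "k' \<le> k" using dcube_level[OF d] Q' 1 by auto
    moreover have "k0 \<le> k'" using dcube_level[OF d] Q' 2 by auto
    moreover have "Q' = dcube d k' (\<lambda>i. \<lfloor>x i * 2 powr real_of_int k'\<rfloor>)"
    proof -
      have "x \<in> dcube d k' j'" using x Q' by auto
      then show ?thesis unfolding Q'(1) by (intro dcube_cong) (auto simp: mem_dcube)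
    qed
    ultimately show "Q' \<in> (\<lambda>k'. dcube d k' (\<lambda>i. \<lfloor>x i * 2 powr real_of_int k'\<rfloor>)) ` {k0..k}" by auto
  qed
  then show ?thesis by (rule finite_subset) simp
qed


declare comp_meas[measurable del]


lemma infsum_ennreal_nat:
  fixes f :: "'a \<Rightarrow> ennreal"
  assumes "countable A" "infinite A"
  shows "infsum f A = (\<Sum>n. f (from_nat_into A n))"
proof -
  have bij: "bij_betw (from_nat_into A) UNIV A" using bij_betw_from_nat_into assms by blast
  have "infsum f A = infsum (\<lambda>n. f (from_nat_into A n)) UNIV"
    using infsum_reindex_bij_betw[OF bij, of f] by simp
  also have "\<dots> = (\<Sum>n. f (from_nat_into A n))"
  proof -
    have "((\<lambda>n. f (from_nat_into A n)) has_sum infsum (\<lambda>n. f (from_nat_into A n)) UNIV) UNIV"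
      by (rule has_sum_infsum) (rule nonneg_summable_on_complete, simp)
    then show ?thesis by (metis has_sum_imp_sums sums_unique)
  qed
  finally show ?thesis .
qed

lemma infsum_nn_integral_count:
  fixes f :: "'a \<Rightarrow> ennreal"
  assumes "countable A"
  shows "infsum f A = (\<integral>\<^sup>+x. f x \<partial>count_space A)"
proof (cases "finite A")
  case True then show ?thesis by (simp add: nn_integral_count_space_finite)
next
  case False
  have bij: "bij_betw (from_nat_into A) UNIV A" using bij_betw_from_nat_into assms False by blast
  have "(\<integral>\<^sup>+x. f x \<partial>count_space A) = (\<integral>\<^sup>+n. f (from_nat_into A n) \<partial>count_space UNIV)"
    using nn_integral_bij_count_space[OF bij, of f] by simp
  also have "\<dots> = (\<Sum>n. f (from_nat_into A n))" by (rule nn_integral_count_space_nat)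
  finally show ?thesis using infsum_ennreal_nat[OF assms False] by simp
qed

lemma borel_measurable_infsum_ennreal:
  fixes f :: "'i \<Rightarrow> 'a \<Rightarrow> ennreal"
  assumes "countable A" "\<And>i. i \<in> A \<Longrightarrow> f i \<in> borel_measurable M"
  shows "(\<lambda>x. infsum (\<lambda>i. f i x) A) \<in> borel_measurable M"
proof (cases "finite A")
  case True
  then have "(\<lambda>x. infsum (\<lambda>i. f i x) A) = (\<lambda>x. \<Sum>i\<in>A. f i x)" by simp
  then show ?thesis using assms by simp
next
  case False
  have A: "A \<noteq> {}" using False by auto
  have "(\<lambda>x. infsum (\<lambda>i. f i x) A) = (\<lambda>x. \<Sum>n. f (from_nat_into A n) x)"
    using infsum_ennreal_nat[OF assms(1) False] by simp
  moreover have "(\<lambda>x. \<Sum>n. f (from_nat_into A n) x) \<in> borel_measurable M"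
    using assms(2) from_nat_into[OF A] by measurable
  ultimately show ?thesis by simp
qed

lemma nn_integral_infsum:
  fixes f :: "'i \<Rightarrow> 'a \<Rightarrow> ennreal"
  assumes "countable A" "\<And>i. i \<in> A \<Longrightarrow> f i \<in> borel_measurable M"
  shows "(\<integral>\<^sup>+x. infsum (\<lambda>i. f i x) A \<partial>M) = infsum (\<lambda>i. \<integral>\<^sup>+x. f i x \<partial>M) A"
  unfolding infsum_nn_integral_count[OF assms(1)]
  by (rule nn_integral_count_space_nn_integral[OF assms])

lemma infsum_cmult_ennreal:
  fixes f :: "'a \<Rightarrow> ennreal"
  assumes "countable A"
  shows "infsum (\<lambda>i. c * f i) A = c * infsum f A"
  unfolding infsum_nn_integral_count[OF assms(1)]
  by (rule nn_integral_cmult) simp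

lemma infsum_multc_ennreal:
  fixes f :: "'a \<Rightarrow> ennreal"
  assumes "countable A"
  shows "infsum (\<lambda>i. f i * c) A = infsum f A * c"
  using infsum_cmult_ennreal[OF assms, of c f] by (simp add: mult.commute)

lemma infsum_mono_ennreal:
  fixes f g :: "'a \<Rightarrow> ennreal"
  assumes "\<And>i. i \<in> A \<Longrightarrow> f i \<le> g i"
  shows "infsum f A \<le> infsum g A"
  by (rule infsum_mono) (auto intro: nonneg_summable_on_complete assms)

lemma ennreal_infsum_real:
  fixes f :: "'a \<Rightarrow> real"
  assumes "f summable_on A" "\<And>x. x \<in> A \<Longrightarrow> 0 \<le> f x"
  shows "ennreal (infsum f A) = infsum (\<lambda>x. ennreal (f x)) A"
proof -
  have "infsum (\<lambda>x. ennreal (f x)) A = (SUP F\<in>{F. finite F \<and> F \<subseteq> A}. sum (\<lambda>x. ennreal (f x)) F)"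
    by (rule nonneg_infsum_complete) simp
  also have "\<dots> = (SUP F\<in>{F. finite F \<and> F \<subseteq> A}. ennreal (sum f F))"
    by (intro SUP_cong refl) (auto intro!: sum_ennreal assms(2))
  finally show ?thesis using infsum_nonneg_is_SUPREMUM_ennreal[OF assms] by simp
qed

lemma norm_infsum_ennreal:
  fixes c :: "'a \<Rightarrow> complex"
  shows "ennreal (cmod (infsum c A)) \<le> infsum (\<lambda>x. ennreal (cmod (c x))) A"
proof (cases "c summable_on A")
  case True
  then have ab: "(\<lambda>x. cmod (c x)) summable_on A"
    using summable_on_iff_abs_summable_on_complex by blast
  have "cmod (infsum c A) \<le> infsum (\<lambda>x. cmod (c x)) A"
    by (rule norm_infsum_le[OF has_sum_infsum[OF True] has_sum_infsum[OF ab]]) simp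
  then have "ennreal (cmod (infsum c A)) \<le> ennreal (infsum (\<lambda>x. cmod (c x)) A)"
    by (rule ennreal_leI)
  also have "\<dots> = infsum (\<lambda>x. ennreal (cmod (c x))) A"
    by (rule ennreal_infsum_real[OF ab]) simp
  finally show ?thesis .
next
  case False then show ?thesis by (simp add: infsum_not_exists)
qed

lemma epowr_mono:
  assumes "a \<le> b" "0 < r"
  shows "epowr a r \<le> epowr b r"
proof (cases "b = \<infinity>")
  case True then show ?thesis by (simp add: epowr_def)
next
  case False
  then have "a \<noteq> \<infinity>" using assms(1) by (auto simp: top_unique)
  moreover have "enn2real a \<le> enn2real b" using assms(1) False by (auto intro: enn2real_mono simp: less_top[symmetric])
  ultimately show ?thesis using False assms(2)
    by (auto simp: epowr_def intro!: ennreal_leI powr_mono2)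
qed

lemma epowr_ennreal: "0 \<le> c \<Longrightarrow> epowr (ennreal c) r = ennreal (c powr r)"
  by (simp add: epowr_def)

lemma epowr_0: "0 < r \<Longrightarrow> epowr 0 r = 0"
  by (simp add: epowr_def)

lemma epowr_top: "epowr \<infinity> r = \<infinity>"
  by (simp add: epowr_def)

lemma epowr_mult:
  assumes "0 < r"
  shows "epowr (a * b) r = epowr a r * epowr b r"
proof (cases "a = 0 \<or> b = 0")
  case True then show ?thesis using assms by (auto simp: epowr_0)
next
  case False
  show ?thesis
  proof (cases "a = \<infinity> \<or> b = \<infinity>")
    case True
    then have "a * b = \<infinity>" using False by (auto simp: ennreal_mult_eq_top_iff)
    moreover have "epowr a r * epowr b r = \<infinity>"
    proof -
      have "epowr a r \<noteq> 0" "epowr b r \<noteq> 0" using False assms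
        by (auto simp: epowr_def enn2real_eq_0_iff)
      moreover have "epowr a r = \<infinity> \<or> epowr b r = \<infinity>" using True by (auto simp: epowr_def)
      ultimately show ?thesis by (auto simp: ennreal_mult_eq_top_iff)
    qed
    ultimately show ?thesis by (simp add: epowr_def)
  next
    case F2: False
    then obtain x y where xy: "a = ennreal x" "b = ennreal y" "0 \<le> x" "0 \<le> y"
      by (metis ennreal_cases infinity_ennreal_def)
    then have "a * b = ennreal (x * y)" by (simp add: ennreal_mult)
    have "epowr (a*b) r = ennreal ((x*y) powr r)" unfolding \<open>a * b = ennreal (x * y)\<close>
      by (rule epowr_ennreal) (simp add: xy)
    also have "\<dots> = ennreal (x powr r) * ennreal (y powr r)" using xy by (simp add: powr_mult ennreal_mult)
    also have "\<dots> = epowr a r * epowr b r" using xy by (simp add: epowr_ennreal)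
    finally show ?thesis .
  qed
qed

lemma epowr_epowr:
  assumes "0 < r"
  shows "epowr (epowr a r) (1 / r) = a"
proof (cases "a = \<infinity>")
  case True then show ?thesis by (simp add: epowr_def)
next
  case False
  then obtain x where x: "a = ennreal x" "0 \<le> x" by (metis ennreal_cases infinity_ennreal_def)
  then show ?thesis using assms by (simp add: epowr_def powr_powr)
qed

lemma measurable_epowr:
  assumes f: "f \<in> borel_measurable M"
  shows "(\<lambda>x. epowr (f x) r) \<in> borel_measurable M"
proof -
  have "(\<lambda>y::ennreal. epowr y r) \<in> borel_measurable borel"
    unfolding epowr_def by measurable
  then show ?thesis using f by (rule measurable_compose[rotated])
qed

declare measurable_epowr[measurable]


lemma young_real:
  fixes p a t :: real
  assumes p: "1 < p" and a: "0 \<le> a" and t: "0 \<le> t"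
  shows "a * (p / (p - 1) * t powr (p - 1)) \<le> (2 * (p / (p - 1))) powr p / p * a powr p + 1/2 * t powr p"
proof -
  define c where "c = p / (p - 1)"
  have c1: "1 < c" using p unfolding c_def by (simp add: field_simps)
  have pq: "1 / p + 1 / c = 1" using p unfolding c_def by (simp add: field_simps)
  have x0: "0 \<le> 2 * c * a" using a c1 by simp
  have y0: "0 \<le> t powr (p - 1) / 2" by simp
  have "a * (c * t powr (p - 1)) = (2 * c * a) * (t powr (p - 1) / 2)" by (simp add: field_simps)
  also have "\<dots> \<le> (2 * c * a) powr p / p + (t powr (p - 1) / 2) powr c / c"
    by (rule Youngs_inequality[OF p c1 pq x0 y0])
  also have "(2 * c * a) powr p = (2 * c) powr p * a powr p"
    using a c1 by (simp add: powr_mult)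
  also have "(t powr (p - 1) / 2) powr c = t powr p / 2 powr c"
  proof -
    have "(t powr (p - 1) / 2) powr c = (t powr (p - 1)) powr c / 2 powr c"
      using t by (simp add: powr_divide)
    also have "(t powr (p - 1)) powr c = t powr p"
      using p unfolding c_def by (simp add: powr_powr)
    finally show ?thesis .
  qed
  also have "t powr p / 2 powr c / c \<le> 1/2 * t powr p"
  proof -
    have "2 powr 1 \<le> (2::real) powr c" by (rule powr_mono) (use c1 in auto)
    then have 2: "2 \<le> (2::real) powr c" by simp
    have "2 powr c \<le> 2 powr c * c" using c1 by simp
    then have "2 \<le> 2 powr c * c" using 2 by linarith
    then have "t powr p / (2 powr c * c) \<le> t powr p / 2"
      by (intro divide_left_mono) auto
    then show ?thesis by simp
  qed
  finally show ?thesis unfolding c_def by (simp add: field_simps)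
qed

lemma young_ennreal:
  fixes p t :: real and a :: ennreal
  assumes p: "1 < p" and t: "0 \<le> t"
  shows "a * ennreal (p / (p - 1) * t powr (p - 1))
     \<le> ennreal ((2 * (p / (p - 1))) powr p / p) * epowr a p + ennreal (1/2) * ennreal (t powr p)"
proof (cases "a = \<infinity>")
  case True
  show ?thesis
  proof (cases "t = 0")
    case True then show ?thesis by simp
  next
    case False
    have "0 < (2 * (p / (p - 1))) powr p / p" using p by simp
    then have "ennreal ((2 * (p / (p - 1))) powr p / p) * epowr a p = \<infinity>"
      using \<open>a = \<infinity>\<close> p by (simp add: epowr_def ennreal_mult_top)
    then show ?thesis by simp
  qed
next
  case False
  then obtain x where x: "a = ennreal x" "0 \<le> x" by (metis ennreal_cases infinity_ennreal_def)
  have "ennreal (x * (p / (p - 1) * t powr (p - 1))) = ennreal x * ennreal (p / (p - 1) * t powr (p - 1))"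
    by (rule ennreal_mult) (use x p t in auto)
  then have "a * ennreal (p / (p - 1) * t powr (p - 1)) = ennreal (x * (p / (p - 1) * t powr (p - 1)))"
    using x by simp
  also have "\<dots> \<le> ennreal ((2 * (p / (p - 1))) powr p / p * x powr p + 1/2 * t powr p)"
    by (rule ennreal_leI, rule young_real[OF p x(2) t])
  also have "\<dots> = ennreal ((2 * (p / (p - 1))) powr p / p) * epowr a p + ennreal (1/2) * ennreal (t powr p)"
  proof -
    have A0: "0 \<le> (2 * (p / (p - 1))) powr p / p" using p by simp
    have B0: "0 \<le> (2 * (p / (p - 1))) powr p / p * x powr p" by (rule mult_nonneg_nonneg[OF A0]) simp
    have "ennreal ((2 * (p / (p - 1))) powr p / p * x powr p + 1/2 * t powr p)
       = ennreal ((2 * (p / (p - 1))) powr p / p * x powr p) + ennreal (1/2 * t powr p)"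
      by (rule ennreal_plus[OF B0]) simp
    also have "ennreal ((2 * (p / (p - 1))) powr p / p * x powr p) = ennreal ((2 * (p / (p - 1))) powr p / p) * ennreal (x powr p)"
      by (rule ennreal_mult) (use A0 in auto)
    also have "ennreal (1/2 * t powr p) = ennreal (1/2) * ennreal (t powr p)"
      by (rule ennreal_mult) auto
    also have "ennreal (x powr p) = epowr a p" using x by (simp add: epowr_ennreal)
    finally show ?thesis .
  qed
  finally show ?thesis .
qed

lemma powr_integral_nn:
  fixes a c \<kappa> :: real
  assumes a: "-1 < a" and c: "0 \<le> c" and k: "0 \<le> \<kappa>"
  shows "(\<integral>\<^sup>+l. ennreal (\<kappa> * l powr a) * indicator {0<..<c} l \<partial>lborel) = ennreal (\<kappa> * (c powr (a + 1) / (a + 1)))"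
proof -
  have hi: "((\<lambda>l. \<kappa> * l powr a) has_integral \<kappa> * (c powr (a + 1) / (a + 1))) {0..c}"
    using has_integral_powr_from_0[OF a c] by (rule has_integral_mult_right)
  have "(\<integral>\<^sup>+l. ennreal (\<kappa> * l powr a) * indicator {0..c} l \<partial>lborel) = ennreal (\<kappa> * (c powr (a + 1) / (a + 1)))"
    by (rule nn_integral_has_integral_lebesgue'[OF _ hi]) (simp add: k)
  moreover have "(\<integral>\<^sup>+l. ennreal (\<kappa> * l powr a) * indicator {0<..<c} l \<partial>lborel)
     = (\<integral>\<^sup>+l. ennreal (\<kappa> * l powr a) * indicator {0..c} l \<partial>lborel)"
  proof (rule nn_integral_cong_AE)
    have "AE l in lborel. l \<noteq> 0" "AE l in lborel. l \<noteq> c" by (rule AE_lborel_singleton)+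
    then show "AE l in lborel. ennreal (\<kappa> * l powr a) * indicator {0<..<c} l = ennreal (\<kappa> * l powr a) * indicator {0..c} l"
      by eventually_elim (auto simp: indicator_def)
  qed
  ultimately show ?thesis by simp
qed


definition wI :: "'a measure \<Rightarrow> ('a \<Rightarrow> real) \<Rightarrow> 'a set \<Rightarrow> ennreal" where
  "wI M w Q = (\<integral>\<^sup>+x\<in>Q. ennreal (w x) \<partial>M)"
definition fI :: "'a measure \<Rightarrow> ('a \<Rightarrow> real) \<Rightarrow> ('a \<Rightarrow> ennreal) \<Rightarrow> 'a set \<Rightarrow> ennreal" where
  "fI M w f Q = (\<integral>\<^sup>+x\<in>Q. f x * ennreal (w x) \<partial>M)"
definition avgw :: "'a measure \<Rightarrow> ('a \<Rightarrow> real) \<Rightarrow> ('a \<Rightarrow> ennreal) \<Rightarrow> 'a set \<Rightarrow> ennreal" where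
  "avgw M w f Q = (if wI M w Q = 0 then 0 else fI M w f Q / wI M w Q)"
definition dmax :: "'a measure \<Rightarrow> ('a \<Rightarrow> real) \<Rightarrow> ('a \<Rightarrow> ennreal) \<Rightarrow> 'a set set \<Rightarrow> 'a \<Rightarrow> ennreal" where
  "dmax M w f Qs x = (SUP Q\<in>Qs. indicator Q x * avgw M w f Q)"

locale doobctx =
  fixes M :: "'a measure" and w :: "'a \<Rightarrow> real" and f :: "'a \<Rightarrow> ennreal" and Qs :: "'a set set" and E :: "'a set"
  assumes sf: "sigma_finite_measure M"
  and cQ: "countable Qs" and sQ: "\<And>Q. Q \<in> Qs \<Longrightarrow> Q \<in> sets M"
  and wm[measurable]: "w \<in> borel_measurable M" and wp: "\<And>x. x \<in> space M \<Longrightarrow> 0 \<le> w x"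
  and nest: "\<And>Q1 Q2. Q1 \<in> Qs \<Longrightarrow> Q2 \<in> Qs \<Longrightarrow> Q1 \<inter> Q2 \<noteq> {} \<Longrightarrow> Q1 \<subseteq> Q2 \<or> Q2 \<subseteq> Q1"
  and anc: "\<And>Q. Q \<in> Qs \<Longrightarrow> finite {Q'\<in>Qs. Q \<subseteq> Q'}"
  and sE[measurable]: "E \<in> sets M" and QE: "\<And>Q. Q \<in> Qs \<Longrightarrow> Q \<subseteq> E"
  and Efin: "wI M w E < \<infinity>"
  and fm[measurable]: "f \<in> borel_measurable M"
begin

lemma dmax_meas[measurable]: "dmax M w f Qs \<in> borel_measurable M"
proof -
  have "(\<lambda>x. SUP Q\<in>Qs. indicator Q x * avgw M w f Q) \<in> borel_measurable M"
    by (rule borel_measurable_SUP[OF cQ]) (use sQ in measurable)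
  then show ?thesis unfolding dmax_def[abs_def] .
qed

lemma wI_fin: "Q \<in> Qs \<Longrightarrow> wI M w Q < \<infinity>"
proof -
  assume Q: "Q \<in> Qs"
  have "wI M w Q \<le> wI M w E" unfolding wI_def
    by (intro nn_integral_mono) (use QE[OF Q] in \<open>auto simp: indicator_def\<close>)
  then show ?thesis using Efin by simp
qed

lemma WT:
  assumes l: "0 < l"
  shows "ennreal l * (\<integral>\<^sup>+x. ennreal (w x) * indicator E x * indicator {x. ennreal l < dmax M w f Qs x} x \<partial>M)
     \<le> (\<integral>\<^sup>+x. f x * ennreal (w x) * indicator E x * indicator {x. ennreal l < dmax M w f Qs x} x \<partial>M)"
proof -
  define S where "S = {Q\<in>Qs. ennreal l < avgw M w f Q}"
  define Smax where "Smax = {Q\<in>S. \<forall>Q'\<in>S. Q \<subseteq> Q' \<longrightarrow> Q' = Q}"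
  have SQ: "S \<subseteq> Qs" "Smax \<subseteq> S" unfolding S_def Smax_def by auto
  have a: "ennreal l < dmax M w f Qs x \<longleftrightarrow> (\<exists>Q\<in>S. x \<in> Q)" for x
    unfolding dmax_def less_SUP_iff S_def using l by (auto simp: indicator_def)
  have b: "\<exists>Q'\<in>Smax. Q \<subseteq> Q'" if Q: "Q \<in> S" for Q
  proof -
    let ?A = "{Q'\<in>S. Q \<subseteq> Q'}"
    have "finite {Q'\<in>Qs. Q \<subseteq> Q'}" using anc[of Q] Q SQ by auto
    moreover have "?A \<subseteq> {Q'\<in>Qs. Q \<subseteq> Q'}" using SQ by auto
    ultimately have "finite ?A" by (rule finite_subset[rotated])
    moreover have "?A \<noteq> {}" using Q by auto
    ultimately have "\<exists>m\<in>?A. \<forall>b\<in>?A. m \<le> b \<longrightarrow> m = b" by (rule finite_has_maximal)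
    then obtain m where m1: "m \<in> ?A" and m2: "\<And>b. b \<in> ?A \<Longrightarrow> m \<subseteq> b \<Longrightarrow> m = b" by auto
    have "m \<in> Smax" unfolding Smax_def
    proof (intro CollectI conjI ballI impI)
      show "m \<in> S" using m1 by simp
      fix Q' assume "Q' \<in> S" "m \<subseteq> Q'"
      then have "Q' \<in> ?A" using m1 by auto
      then show "Q' = m" using m2 \<open>m \<subseteq> Q'\<close> by (metis)
    qed
    then show ?thesis using m1 by auto
  qed
  have disj: "disjoint_family_on (\<lambda>Q. Q) Smax"
    unfolding disjoint_family_on_def
  proof (intro ballI impI)
    fix Q1 Q2 assume Q: "Q1 \<in> Smax" "Q2 \<in> Smax" "Q1 \<noteq> Q2"
    show "Q1 \<inter> Q2 = {}"
    proof (rule ccontr)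
      assume "Q1 \<inter> Q2 \<noteq> {}"
      then have "Q1 \<subseteq> Q2 \<or> Q2 \<subseteq> Q1" using nest Q SQ by blast
      moreover have "Q' = Q1" if "Q' \<in> S" "Q1 \<subseteq> Q'" for Q' using Q(1) that unfolding Smax_def by blast
      moreover have "Q' = Q2" if "Q' \<in> S" "Q2 \<subseteq> Q'" for Q' using Q(2) that unfolding Smax_def by blast
      moreover have "Q1 \<in> S" "Q2 \<in> S" using Q SQ by auto
      ultimately show False using Q(3) by blast
    qed
  qed
  have cS: "countable Smax" using SQ cQ by (meson countable_subset subset_trans)
  have sS: "Q \<in> sets M" if "Q \<in> Smax" for Q using that SQ sQ by auto
  define U where "U = \<Union>Smax"
  have U: "U \<in> sets M" unfolding U_def using cS sS by (intro sets.countable_Union) auto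
  have UE: "U \<subseteq> E" unfolding U_def using SQ QE by blast
  have ind: "indicator E x * indicator {x. ennreal l < dmax M w f Qs x} x = (indicator U x :: ennreal)" for x
  proof -
    have "ennreal l < dmax M w f Qs x \<longleftrightarrow> x \<in> U"
      unfolding a U_def using b SQ by blast
    then show ?thesis using UE by (auto simp: indicator_def)
  qed
  have eq1: "(\<integral>\<^sup>+x. ennreal (w x) * indicator E x * indicator {x. ennreal l < dmax M w f Qs x} x \<partial>M)
     = emeasure (density M (\<lambda>x. ennreal (w x))) U"
    by (subst emeasure_density) (auto simp: U mult.assoc ind)
  have eq2: "(\<integral>\<^sup>+x. f x * ennreal (w x) * indicator E x * indicator {x. ennreal l < dmax M w f Qs x} x \<partial>M)
     = emeasure (density M (\<lambda>x. f x * ennreal (w x))) U"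
    by (subst emeasure_density) (auto simp: U mult.assoc ind)
  have "ennreal l * emeasure (density M (\<lambda>x. ennreal (w x))) U
     = ennreal l * (\<integral>\<^sup>+Q. emeasure (density M (\<lambda>x. ennreal (w x))) Q \<partial>count_space Smax)"
    unfolding U_def using emeasure_UN_countable[of Smax "\<lambda>Q. Q" "density M (\<lambda>x. ennreal (w x))"] cS disj sS
    by simp
  also have "\<dots> = (\<integral>\<^sup>+Q. ennreal l * emeasure (density M (\<lambda>x. ennreal (w x))) Q \<partial>count_space Smax)"
    by (rule nn_integral_cmult[symmetric]) simp
  also have "\<dots> \<le> (\<integral>\<^sup>+Q. emeasure (density M (\<lambda>x. f x * ennreal (w x))) Q \<partial>count_space Smax)"
  proof (rule nn_integral_mono)
    fix Q assume "Q \<in> space (count_space Smax)"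
    then have Q: "Q \<in> Smax" by simp
    then have QS: "Q \<in> S" "Q \<in> Qs" using SQ by auto
    have e1: "emeasure (density M (\<lambda>x. ennreal (w x))) Q = wI M w Q"
      unfolding wI_def using sS[OF Q] by (simp add: emeasure_density)
    have e2: "emeasure (density M (\<lambda>x. f x * ennreal (w x))) Q = fI M w f Q"
      unfolding fI_def using sS[OF Q] by (simp add: emeasure_density)
    have lt: "ennreal l < avgw M w f Q" using QS unfolding S_def by auto
    then have w0: "wI M w Q \<noteq> 0" unfolding avgw_def by auto
    with lt have lt2: "ennreal l < fI M w f Q / wI M w Q" unfolding avgw_def by simp
    have wf: "wI M w Q \<noteq> \<infinity>" using wI_fin[OF QS(2)] by simp
    have "ennreal l * wI M w Q \<le> fI M w f Q / wI M w Q * wI M w Q"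
      using lt2 by (intro mult_right_mono) auto
    also have "\<dots> = fI M w f Q"
      using w0 wf by (simp add: ennreal_divide_times ennreal_divide_self less_top)
    finally show "ennreal l * emeasure (density M (\<lambda>x. ennreal (w x))) Q \<le> emeasure (density M (\<lambda>x. f x * ennreal (w x))) Q"
      using e1 e2 by simp
  qed
  also have "\<dots> = emeasure (density M (\<lambda>x. f x * ennreal (w x))) U"
    unfolding U_def using emeasure_UN_countable[of Smax "\<lambda>Q. Q" "density M (\<lambda>x. f x * ennreal (w x))"] cS disj sS
    by simp
  finally show ?thesis using eq1 eq2 by simp
qed

end


definition trunc :: "'a measure \<Rightarrow> ('a \<Rightarrow> real) \<Rightarrow> ('a \<Rightarrow> ennreal) \<Rightarrow> 'a set set \<Rightarrow> real \<Rightarrow> 'a \<Rightarrow> real" where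
  "trunc M w f Qs K x = enn2real (min (dmax M w f Qs x) (ennreal K))"

lemma absorb:
  fixes X A :: ennreal
  assumes "X < \<infinity>" "X \<le> A + ennreal (1/2) * X"
  shows "X \<le> ennreal 2 * A"
proof (cases "A = \<infinity>")
  case True then show ?thesis by (simp add: ennreal_mult_top)
next
  case False
  obtain x where x: "X = ennreal x" "0 \<le> x" using assms(1) by (cases X rule: ennreal_cases) auto
  obtain a where a: "A = ennreal a" "0 \<le> a" using False by (metis ennreal_cases infinity_ennreal_def)
  have e1: "ennreal (1/2 * x) = ennreal (1/2) * ennreal x" by (rule ennreal_mult) (use x in auto)
  have e2: "ennreal (a + 1/2 * x) = ennreal a + ennreal (1/2 * x)" by (rule ennreal_plus) (use a x in auto)
  have "ennreal x \<le> ennreal (a + 1/2 * x)" using assms(2) unfolding e2 e1 x(1) a(1) .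
  then have "x \<le> a + 1/2 * x" by (subst (asm) ennreal_le_iff) (use a x in auto)
  then have "x \<le> 2 * a" by simp
  then have "ennreal x \<le> ennreal (2 * a)" by (rule ennreal_leI)
  also have "ennreal (2 * a) = ennreal 2 * ennreal a" by (rule ennreal_mult) (use a in auto)
  finally show ?thesis using x a by simp
qed

context doobctx begin

lemma trunc_props:
  assumes K: "0 < K"
  shows "0 \<le> trunc M w f Qs K x" "trunc M w f Qs K x \<le> K"
    "\<And>l. 0 \<le> l \<Longrightarrow> l < trunc M w f Qs K x \<longleftrightarrow> l < K \<and> ennreal l < dmax M w f Qs x"
proof -
  have fin: "min (dmax M w f Qs x) (ennreal K) \<le> ennreal K" by simp
  then have mt: "min (dmax M w f Qs x) (ennreal K) = ennreal (trunc M w f Qs K x)"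
    unfolding trunc_def by (metis ennreal_enn2real ennreal_less_top order.strict_trans1)
  show "0 \<le> trunc M w f Qs K x" unfolding trunc_def by simp
  show "trunc M w f Qs K x \<le> K" using fin K unfolding mt by (simp add: ennreal_le_iff)
  fix l :: real assume l: "0 \<le> l"
  have "l < trunc M w f Qs K x \<longleftrightarrow> ennreal l < ennreal (trunc M w f Qs K x)"
    using l by (simp add: ennreal_less_iff)
  also have "\<dots> \<longleftrightarrow> ennreal l < min (dmax M w f Qs x) (ennreal K)" unfolding mt ..
  also have "\<dots> \<longleftrightarrow> l < K \<and> ennreal l < dmax M w f Qs x" using l by (auto simp: ennreal_less_iff)
  finally show "l < trunc M w f Qs K x \<longleftrightarrow> l < K \<and> ennreal l < dmax M w f Qs x" .
qed

lemma trunc_meas[measurable]: "trunc M w f Qs K \<in> borel_measurable M"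
  unfolding trunc_def[abs_def] by measurable

lemma indic_if: "(indicator A x :: ennreal) = (if x \<in> A then 1 else 0)"
  by (simp add: indicator_def)

lemma doob_trunc:
  assumes p: "1 < p" and K: "0 < K"
  shows "(\<integral>\<^sup>+x. ennreal (w x) * indicator E x * ennreal (trunc M w f Qs K x powr p) \<partial>M)
    \<le> ennreal 2 * (ennreal ((2 * (p / (p - 1))) powr p / p) * (\<integral>\<^sup>+x. ennreal (w x) * indicator E x * epowr (f x) p \<partial>M))"
proof -
  interpret sfM: sigma_finite_measure M by (rule sf)
  interpret pair_sigma_finite M lborel
    unfolding pair_sigma_finite_def using sf sigma_finite_lborel by auto
  define t where "t = trunc M w f Qs K"
  define D where "D = dmax M w f Qs"
  define g where "g x = ennreal (w x) * indicator E x" for x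
  define \<alpha> where "\<alpha> = (2 * (p / (p - 1))) powr p / p"
  have tm[measurable]: "t \<in> borel_measurable M" unfolding t_def by simp
  have Dm[measurable]: "D \<in> borel_measurable M" unfolding D_def by simp
  have gm[measurable]: "g \<in> borel_measurable M" unfolding g_def[abs_def] by simp
  have t0: "0 \<le> t x" and tK: "t x \<le> K" for x unfolding t_def using trunc_props[OF K] by auto
  have tl: "0 \<le> l \<Longrightarrow> l < t x \<longleftrightarrow> l < K \<and> ennreal l < D x" for l x
    unfolding t_def D_def using trunc_props(3)[OF K] by auto
  define X where "X = (\<integral>\<^sup>+x. g x * ennreal (t x powr p) \<partial>M)"
  define F where "F = (\<integral>\<^sup>+x. g x * epowr (f x) p \<partial>M)"
  have indm[measurable]: "(\<lambda>z. indicator {0<..<t (fst z)} (snd z) :: ennreal) \<in> borel_measurable (M \<Otimes>\<^sub>M lborel)"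
  proof -
    have "(\<lambda>z. indicator {0<..<t (fst z)} (snd z) :: ennreal) = (\<lambda>z. if 0 < snd z \<and> snd z < t (fst z) then 1 else 0)"
      by (auto simp: fun_eq_iff indicator_def)
    also have "\<dots> \<in> borel_measurable (M \<Otimes>\<^sub>M lborel)" by measurable
    finally show ?thesis .
  qed
  have indl[measurable]: "(\<lambda>l. indicator {0<..<c} l :: ennreal) \<in> borel_measurable lborel" for c :: real
    by measurable
  have S1: "ennreal (t x powr p) = (\<integral>\<^sup>+l. ennreal (p * l powr (p - 1)) * indicator {0<..<t x} l \<partial>lborel)" for x
    using powr_integral_nn[of "p - 1" "t x" p] p t0[of x] by simp
  have "X = (\<integral>\<^sup>+x. \<integral>\<^sup>+l. g x * (ennreal (p * l powr (p - 1)) * indicator {0<..<t x} l) \<partial>lborel \<partial>M)"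
    unfolding X_def S1 by (intro nn_integral_cong nn_integral_cmult[symmetric]) measurable
  also have "\<dots> = (\<integral>\<^sup>+l. \<integral>\<^sup>+x. g x * (ennreal (p * l powr (p - 1)) * indicator {0<..<t x} l) \<partial>M \<partial>lborel)"
  proof (rule Fubini'[symmetric])
    have "(\<lambda>(x, l). g x * (ennreal (p * l powr (p - 1)) * indicator {0<..<t x} l))
      = (\<lambda>z. g (fst z) * (ennreal (p * snd z powr (p - 1)) * indicator {0<..<t (fst z)} (snd z)))" by auto
    also have "\<dots> \<in> borel_measurable (M \<Otimes>\<^sub>M lborel)" by measurable
    finally show "(\<lambda>(x, l). g x * (ennreal (p * l powr (p - 1)) * indicator {0<..<t x} l)) \<in> borel_measurable (M \<Otimes>\<^sub>M lborel)" .
  qed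
  also have "\<dots> \<le> (\<integral>\<^sup>+l. \<integral>\<^sup>+x. f x * g x * (ennreal (p * l powr (p - 2)) * indicator {0<..<t x} l) \<partial>M \<partial>lborel)"
  proof (rule nn_integral_mono)
    fix l :: real
    show "(\<integral>\<^sup>+x. g x * (ennreal (p * l powr (p - 1)) * indicator {0<..<t x} l) \<partial>M)
      \<le> (\<integral>\<^sup>+x. f x * g x * (ennreal (p * l powr (p - 2)) * indicator {0<..<t x} l) \<partial>M)"
    proof (cases "0 < l \<and> l < K")
      case True
      then have l: "0 < l" "l < K" by auto
      have ii: "(indicator {0<..<t x} l :: ennreal) = indicator {x. ennreal l < D x} x" for x
        using tl[of l x] l by (auto simp: indicator_def)
      have im: "(\<lambda>x. indicator {x. ennreal l < D x} x :: ennreal) \<in> borel_measurable M"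
      proof -
        have "(\<lambda>x. indicator {x. ennreal l < D x} x :: ennreal) = (\<lambda>x. if ennreal l < D x then 1 else 0)"
          by (auto simp: fun_eq_iff indicator_def)
        also have "\<dots> \<in> borel_measurable M" by measurable
        finally show ?thesis .
      qed
      have pl: "ennreal (p * l powr (p - 1)) = ennreal (p * l powr (p - 2)) * ennreal l"
      proof -
        have "l powr (p - 1) = l powr ((p - 2) + 1)" by simp
        also have "\<dots> = l powr (p - 2) * l powr 1" by (rule powr_add)
        finally have "l powr (p - 1) = l powr (p - 2) * l powr 1" .
        then have "p * l powr (p - 1) = (p * l powr (p - 2)) * l" using l by simp
        then show ?thesis using l p by (simp add: ennreal_mult mult.assoc)
      qed
      have "(\<integral>\<^sup>+x. g x * (ennreal (p * l powr (p - 1)) * indicator {0<..<t x} l) \<partial>M)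
        = (\<integral>\<^sup>+x. ennreal (p * l powr (p - 1)) * (ennreal (w x) * indicator E x * indicator {x. ennreal l < D x} x) \<partial>M)"
        by (intro nn_integral_cong) (simp add: ii g_def ac_simps)
      also have "\<dots> = ennreal (p * l powr (p - 1)) * (\<integral>\<^sup>+x. ennreal (w x) * indicator E x * indicator {x. ennreal l < D x} x \<partial>M)"
        using im by (intro nn_integral_cmult) measurable
      also have "\<dots> = ennreal (p * l powr (p - 2)) * (ennreal l * (\<integral>\<^sup>+x. ennreal (w x) * indicator E x * indicator {x. ennreal l < D x} x \<partial>M))"
        unfolding pl by (simp add: mult.assoc)
      also have "\<dots> \<le> ennreal (p * l powr (p - 2)) * (\<integral>\<^sup>+x. f x * ennreal (w x) * indicator E x * indicator {x. ennreal l < D x} x \<partial>M)"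
        by (intro mult_left_mono) (use WT[OF l(1)] in \<open>auto simp: D_def\<close>)
      also have "\<dots> = (\<integral>\<^sup>+x. ennreal (p * l powr (p - 2)) * (f x * ennreal (w x) * indicator E x * indicator {x. ennreal l < D x} x) \<partial>M)"
        using im by (intro nn_integral_cmult[symmetric]) measurable
      also have "\<dots> = (\<integral>\<^sup>+x. f x * g x * (ennreal (p * l powr (p - 2)) * indicator {0<..<t x} l) \<partial>M)"
        by (intro nn_integral_cong) (simp add: ii g_def ac_simps)
      finally show ?thesis .
    next
      case False
      have "(indicator {0<..<t x} l :: ennreal) = 0" for x
        using False tK[of x] by (auto simp: indicator_def)
      then show ?thesis by simp
    qed
  qed
  also have "\<dots> = (\<integral>\<^sup>+x. \<integral>\<^sup>+l. f x * g x * (ennreal (p * l powr (p - 2)) * indicator {0<..<t x} l) \<partial>lborel \<partial>M)"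
  proof (rule Fubini')
    have "(\<lambda>(x, l). f x * g x * (ennreal (p * l powr (p - 2)) * indicator {0<..<t x} l))
      = (\<lambda>z. f (fst z) * g (fst z) * (ennreal (p * snd z powr (p - 2)) * indicator {0<..<t (fst z)} (snd z)))" by auto
    also have "\<dots> \<in> borel_measurable (M \<Otimes>\<^sub>M lborel)" by measurable
    finally show "(\<lambda>(x, l). f x * g x * (ennreal (p * l powr (p - 2)) * indicator {0<..<t x} l)) \<in> borel_measurable (M \<Otimes>\<^sub>M lborel)" .
  qed
  also have "\<dots> = (\<integral>\<^sup>+x. f x * g x * ennreal (p * (t x powr (p - 1) / (p - 1))) \<partial>M)"
  proof (intro nn_integral_cong)
    fix x
    have "(\<integral>\<^sup>+l. f x * g x * (ennreal (p * l powr (p - 2)) * indicator {0<..<t x} l) \<partial>lborel)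
      = f x * g x * (\<integral>\<^sup>+l. ennreal (p * l powr (p - 2)) * indicator {0<..<t x} l \<partial>lborel)"
      by (intro nn_integral_cmult) measurable
    also have "(\<integral>\<^sup>+l. ennreal (p * l powr (p - 2)) * indicator {0<..<t x} l \<partial>lborel) = ennreal (p * (t x powr (p - 1) / (p - 1)))"
      using powr_integral_nn[of "p - 2" "t x" p] p t0[of x] by simp
    finally show "(\<integral>\<^sup>+l. f x * g x * (ennreal (p * l powr (p - 2)) * indicator {0<..<t x} l) \<partial>lborel)
      = f x * g x * ennreal (p * (t x powr (p - 1) / (p - 1)))" .
  qed
  also have "\<dots> \<le> (\<integral>\<^sup>+x. g x * (ennreal \<alpha> * epowr (f x) p + ennreal (1/2) * ennreal (t x powr p)) \<partial>M)"
  proof (rule nn_integral_mono)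
    fix x
    have "p * (t x powr (p - 1) / (p - 1)) = p / (p - 1) * t x powr (p - 1)" by simp
    then have "f x * ennreal (p * (t x powr (p - 1) / (p - 1))) \<le> ennreal \<alpha> * epowr (f x) p + ennreal (1/2) * ennreal (t x powr p)"
      using young_ennreal[OF p t0[of x], of "f x"] unfolding \<alpha>_def by simp
    then have "g x * (f x * ennreal (p * (t x powr (p - 1) / (p - 1)))) \<le> g x * (ennreal \<alpha> * epowr (f x) p + ennreal (1/2) * ennreal (t x powr p))"
      by (rule mult_left_mono) simp
    then show "f x * g x * ennreal (p * (t x powr (p - 1) / (p - 1))) \<le> g x * (ennreal \<alpha> * epowr (f x) p + ennreal (1/2) * ennreal (t x powr p))"
      by (simp add: ac_simps)
  qed
  also have "\<dots> = ennreal \<alpha> * F + ennreal (1/2) * X"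
  proof -
    have "(\<integral>\<^sup>+x. g x * (ennreal \<alpha> * epowr (f x) p + ennreal (1/2) * ennreal (t x powr p)) \<partial>M)
      = (\<integral>\<^sup>+x. ennreal \<alpha> * (g x * epowr (f x) p) + ennreal (1/2) * (g x * ennreal (t x powr p)) \<partial>M)"
      by (intro nn_integral_cong) (simp add: distrib_left ac_simps)
    also have "\<dots> = (\<integral>\<^sup>+x. ennreal \<alpha> * (g x * epowr (f x) p) \<partial>M) + (\<integral>\<^sup>+x. ennreal (1/2) * (g x * ennreal (t x powr p)) \<partial>M)"
      by (intro nn_integral_add) measurable
    also have "\<dots> = ennreal \<alpha> * F + ennreal (1/2) * X"
      unfolding F_def X_def by (simp add: nn_integral_cmult)
    finally show ?thesis .
  qed
  finally have ineq: "X \<le> ennreal \<alpha> * F + ennreal (1/2) * X" .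
  have Xfin: "X < \<infinity>"
  proof -
    have "X \<le> (\<integral>\<^sup>+x. ennreal (K powr p) * g x \<partial>M)"
      unfolding X_def
    proof (rule nn_integral_mono)
      fix x
      have "t x powr p \<le> K powr p" using t0[of x] tK[of x] p by (intro powr_mono2) auto
      then show "g x * ennreal (t x powr p) \<le> ennreal (K powr p) * g x"
        by (simp add: mult.commute mult_left_mono ennreal_leI)
    qed
    also have "\<dots> = ennreal (K powr p) * wI M w E"
      unfolding wI_def g_def by (simp add: nn_integral_cmult)
    also have "\<dots> < \<infinity>" using Efin by (simp add: ennreal_mult_less_top)
    finally show ?thesis .
  qed
  have "X \<le> ennreal 2 * (ennreal \<alpha> * F)" by (rule absorb[OF Xfin ineq])
  then show ?thesis unfolding X_def F_def g_def t_def \<alpha>_def .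
qed

end


context doobctx begin

lemma trunc_mono: "0 < K1 \<Longrightarrow> K1 \<le> K2 \<Longrightarrow> trunc M w f Qs K1 x \<le> trunc M w f Qs K2 x"
proof -
  assume K: "0 < K1" "K1 \<le> K2"
  have "min (dmax M w f Qs x) (ennreal K1) \<le> min (dmax M w f Qs x) (ennreal K2)"
    using K by (intro min.mono ennreal_leI) auto
  moreover have "min (dmax M w f Qs x) (ennreal K2) < top"
    by (meson ennreal_less_top min.cobounded2 order.strict_trans1)
  ultimately show ?thesis unfolding trunc_def by (rule enn2real_mono)
qed

lemma epowr_le_SUP:
  assumes p: "1 < p"
  shows "epowr (dmax M w f Qs x) p \<le> (SUP N. ennreal (trunc M w f Qs (real (Suc N)) x powr p))"
proof (cases "dmax M w f Qs x = \<infinity>")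
  case True
  have tr: "trunc M w f Qs (real (Suc N)) x = real (Suc N)" for N
    unfolding trunc_def True by simp
  have "(SUP N. ennreal (trunc M w f Qs (real (Suc N)) x powr p)) = top"
  proof (rule ennreal_SUP_eq_top)
    fix n :: nat
    have "real (Suc n) powr 1 \<le> real (Suc n) powr p" by (rule powr_mono) (use p in auto)
    then have "real n \<le> real (Suc n) powr p" by simp
    then have "of_nat n \<le> ennreal (trunc M w f Qs (real (Suc n)) x powr p)" unfolding tr
      by (simp add: ennreal_of_nat_eq_real_of_nat ennreal_leI)
    then show "\<exists>i\<in>UNIV. of_nat n \<le> ennreal (trunc M w f Qs (real (Suc i)) x powr p)" by blast
  qed
  then show ?thesis by (simp only: True epowr_top top_greatest order_refl)
next
  case False
  then obtain v where v: "dmax M w f Qs x = ennreal v" "0 \<le> v" by (cases "dmax M w f Qs x" rule: ennreal_cases) auto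
  obtain N where N: "v < real N" using reals_Archimedean2 by blast
  have "ennreal v \<le> ennreal (real (Suc N))" using N by (intro ennreal_leI) simp
  then have "min (ennreal v) (ennreal (real (Suc N))) = ennreal v" by (rule min_absorb1)
  then have "trunc M w f Qs (real (Suc N)) x = v" unfolding trunc_def v
    using v by simp
  then have "epowr (dmax M w f Qs x) p = ennreal (trunc M w f Qs (real (Suc N)) x powr p)"
    using v by (simp add: epowr_ennreal)
  also have "\<dots> \<le> (SUP N. ennreal (trunc M w f Qs (real (Suc N)) x powr p))" by (rule SUP_upper) simp
  finally show ?thesis .
qed

lemma doob:
  assumes p: "1 < p"
  shows "(\<integral>\<^sup>+x\<in>E. epowr (dmax M w f Qs x) p * ennreal (w x) \<partial>M)
    \<le> ennreal (2 * ((2 * (p / (p - 1))) powr p / p)) * (\<integral>\<^sup>+x\<in>E. epowr (f x) p * ennreal (w x) \<partial>M)"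
proof -
  define h where "h N x = ennreal (w x) * indicator E x * ennreal (trunc M w f Qs (real (Suc N)) x powr p)" for N x
  have hm[measurable]: "h N \<in> borel_measurable M" for N unfolding h_def[abs_def] by measurable
  have inc: "incseq h"
  proof (intro incseq_SucI le_funI)
    fix N x
    have "trunc M w f Qs (real (Suc N)) x \<le> trunc M w f Qs (real (Suc (Suc N))) x" by (rule trunc_mono) auto
    then have "trunc M w f Qs (real (Suc N)) x powr p \<le> trunc M w f Qs (real (Suc (Suc N))) x powr p"
      using p by (intro powr_mono2) (auto simp: trunc_def)
    then show "h N x \<le> h (Suc N) x" unfolding h_def by (intro mult_left_mono ennreal_leI) auto
  qed
  have "(\<integral>\<^sup>+x\<in>E. epowr (dmax M w f Qs x) p * ennreal (w x) \<partial>M) \<le> (\<integral>\<^sup>+x. (SUP N. h N x) \<partial>M)"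
  proof (rule nn_integral_mono)
    fix x
    have "epowr (dmax M w f Qs x) p * ennreal (w x) * indicator E x
       = (ennreal (w x) * indicator E x) * epowr (dmax M w f Qs x) p" by (simp add: ac_simps)
    also have "\<dots> \<le> (ennreal (w x) * indicator E x) * (SUP N. ennreal (trunc M w f Qs (real (Suc N)) x powr p))"
      by (intro mult_left_mono epowr_le_SUP[OF p]) simp
    also have "\<dots> = (SUP N. h N x)" unfolding h_def by (simp add: SUP_mult_left_ennreal)
    finally show "epowr (dmax M w f Qs x) p * ennreal (w x) * indicator E x \<le> (SUP N. h N x)" .
  qed
  also have "\<dots> = (SUP N. \<integral>\<^sup>+x. h N x \<partial>M)"
    by (rule nn_integral_monotone_convergence_SUP[OF inc]) simp
  also have "\<dots> \<le> ennreal 2 * (ennreal ((2 * (p / (p - 1))) powr p / p) * (\<integral>\<^sup>+x. ennreal (w x) * indicator E x * epowr (f x) p \<partial>M))"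
    unfolding h_def by (intro SUP_least doob_trunc[OF p]) auto
  also have "\<dots> = ennreal (2 * ((2 * (p / (p - 1))) powr p / p)) * (\<integral>\<^sup>+x\<in>E. epowr (f x) p * ennreal (w x) \<partial>M)"
  proof -
    have "0 \<le> (2 * (p / (p - 1))) powr p / p" using p by simp
    then have "ennreal (2 * ((2 * (p / (p - 1))) powr p / p)) = ennreal 2 * ennreal ((2 * (p / (p - 1))) powr p / p)"
      by (intro ennreal_mult) auto
    moreover have "(\<integral>\<^sup>+x. ennreal (w x) * indicator E x * epowr (f x) p \<partial>M) = (\<integral>\<^sup>+x\<in>E. epowr (f x) p * ennreal (w x) \<partial>M)"
      by (intro nn_integral_cong) (simp add: ac_simps)
    ultimately show ?thesis by (simp add: mult.assoc)
  qed
  finally show ?thesis .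
qed

end


lemma child_comb_eq:
  assumes "child_comb d R f"
  obtains c where "f = (\<lambda>y. \<Sum>R''\<in>dchildren d R. c R'' * indicator R'' y)"
  using assms unfolding child_comb_def by blast

lemma child_comb_meas:
  assumes "child_comb d R f"
  shows "f \<in> borel_measurable (RdM d)"
proof -
  obtain c where c: "f = (\<lambda>y. \<Sum>R''\<in>dchildren d R. c R'' * indicator R'' y)" using child_comb_eq[OF assms] .
  have "(\<lambda>y. \<Sum>R''\<in>dchildren d R. c R'' * indicator R'' y) \<in> borel_measurable (RdM d)"
  proof (rule borel_measurable_sum)
    fix R'' assume "R'' \<in> dchildren d R"
    then have "R'' \<in> sets (RdM d)" unfolding dchildren_def using dyadic_sets by auto
    then show "(\<lambda>y. c R'' * indicator R'' y) \<in> borel_measurable (RdM d)" by measurable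
  qed
  then show ?thesis using c by simp
qed

lemma child_comb_zero:
  assumes "child_comb d R f" "y \<notin> R"
  shows "f y = 0"
proof -
  obtain c where c: "f = (\<lambda>y. \<Sum>R''\<in>dchildren d R. c R'' * indicator R'' y)" using child_comb_eq[OF assms(1)] .
  have "\<And>R''. R'' \<in> dchildren d R \<Longrightarrow> y \<notin> R''" using assms(2) unfolding dchildren_def by auto
  then show ?thesis unfolding c by (auto intro!: sum.neutral)
qed

lemma sigma_finite_RdM: "sigma_finite_measure (RdM d)"
proof -
  interpret product_sigma_finite "\<lambda>_. lborel" by standard
  show ?thesis unfolding RdM_def by (rule sigma_finite) simp
qed

locale shiftctx =
  fixes d m n :: nat and h k :: "pt set \<Rightarrow> pt set \<Rightarrow> pt set \<Rightarrow> pt \<Rightarrow> real" and w \<sigma> :: "pt \<Rightarrow> real"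
  assumes d1: "1 \<le> d" and ps: "pos_haar_shift d m n h k" and ww: "weight d w" and ws: "weight d \<sigma>"
begin

abbreviation "M \<equiv> RdM d"
abbreviation "s \<equiv> skernel d m n h k"

lemma w_meas[measurable]: "w \<in> borel_measurable M" using ww unfolding weight_def by auto
lemma sig_meas[measurable]: "\<sigma> \<in> borel_measurable M" using ws unfolding weight_def by auto
lemma w_nn: "x \<in> space M \<Longrightarrow> 0 \<le> w x" using ww unfolding weight_def by auto
lemma sig_nn: "x \<in> space M \<Longrightarrow> 0 \<le> \<sigma> x" using ws unfolding weight_def by auto

lemma weight_fin:
  assumes "weight d v" "Q \<in> dyadic d"
  shows "(\<integral>\<^sup>+x\<in>Q. ennreal (v x) \<partial>M) < \<infinity>"
proof -
  have "integrable M (\<lambda>x. indicator Q x *\<^sub>R v x)" using assms unfolding weight_def set_integrable_def by auto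
  then have "(\<integral>\<^sup>+ x. ennreal (indicator Q x *\<^sub>R v x) \<partial>M) \<noteq> \<infinity>" by (rule integrableD)
  moreover have "(\<integral>\<^sup>+ x. ennreal (indicator Q x *\<^sub>R v x) \<partial>M) = (\<integral>\<^sup>+x\<in>Q. ennreal (v x) \<partial>M)"
    by (intro nn_integral_cong) (auto simp: indicator_def)
  ultimately show ?thesis by (simp add: less_top)
qed

lemma pair_parts:
  assumes "Q \<in> dyadic d" "(Q', R') \<in> shift_pairs d m n Q"
  shows "child_comb d R' (h Q Q' R')" "child_comb d Q' (k Q Q' R')" "R' \<subseteq> Q" "Q' \<subseteq> Q"
  using ps assms unfolding pos_haar_shift_def shift_pairs_def by auto

lemma s_meas:
  assumes Q: "Q \<in> dyadic d"
  shows "(\<lambda>z. s Q (fst z) (snd z)) \<in> borel_measurable (M \<Otimes>\<^sub>M M)"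
proof -
  have "(\<lambda>z. \<Sum>pr\<in>shift_pairs d m n Q. h Q (fst pr) (snd pr) (snd z) * k Q (fst pr) (snd pr) (fst z)) \<in> borel_measurable (M \<Otimes>\<^sub>M M)"
  proof (rule borel_measurable_sum)
    fix pr assume pr: "pr \<in> shift_pairs d m n Q"
    obtain Q' R' where e: "pr = (Q', R')" by (cases pr)
    have [measurable]: "h Q Q' R' \<in> borel_measurable M" "k Q Q' R' \<in> borel_measurable M"
      using pair_parts[OF Q pr[unfolded e]] child_comb_meas by auto
    show "(\<lambda>z. h Q (fst pr) (snd pr) (snd z) * k Q (fst pr) (snd pr) (fst z)) \<in> borel_measurable (M \<Otimes>\<^sub>M M)"
      unfolding e fst_conv snd_conv by measurable
  qed
  moreover have "(\<lambda>z. s Q (fst z) (snd z)) = (\<lambda>z. \<Sum>pr\<in>shift_pairs d m n Q. h Q (fst pr) (snd pr) (snd z) * k Q (fst pr) (snd pr) (fst z))"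
    unfolding skernel_def by (auto simp: case_prod_beta)
  ultimately show ?thesis by simp
qed

lemma s_meas_swap:
  assumes Q: "Q \<in> dyadic d"
  shows "(\<lambda>z. s Q (snd z) (fst z)) \<in> borel_measurable (M \<Otimes>\<^sub>M M)"
proof -
  have "(\<lambda>z. (snd z, fst z)) \<in> M \<Otimes>\<^sub>M M \<rightarrow>\<^sub>M M \<Otimes>\<^sub>M M" by measurable
  from measurable_compose[OF this s_meas[OF Q]] show ?thesis by simp
qed

lemma s_meas_x:
  assumes Q: "Q \<in> dyadic d" and y: "y \<in> space M"
  shows "(\<lambda>x. s Q x y) \<in> borel_measurable M"
  using measurable_compose[OF measurable_Pair2'[OF y] s_meas[OF Q]] by simp

lemma s_meas_y:
  assumes Q: "Q \<in> dyadic d" and x: "x \<in> space M"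
  shows "(\<lambda>y. s Q x y) \<in> borel_measurable M"
  using measurable_compose[OF measurable_Pair1'[OF x] s_meas[OF Q]] by simp

lemma s_zero_y:
  assumes Q: "Q \<in> dyadic d" and y: "y \<notin> Q"
  shows "s Q x y = 0"
  unfolding skernel_def
proof (rule sum.neutral, intro ballI)
  fix pr assume pr: "pr \<in> shift_pairs d m n Q"
  obtain Q' R' where e: "pr = (Q', R')" by (cases pr)
  have "h Q Q' R' y = 0" using pair_parts[OF Q pr[unfolded e]] y by (auto intro: child_comb_zero)
  then show "(case pr of (Q', R') \<Rightarrow> h Q Q' R' y * k Q Q' R' x) = 0" unfolding e by simp
qed

lemma s_nn: "Q \<in> dyadic d \<Longrightarrow> 0 \<le> s Q x y"
  using ps unfolding pos_haar_shift_def by auto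

end


context shiftctx begin

lemma vol_nn: "0 \<le> vol d Q" unfolding vol_def by simp

lemma stepA:
  assumes Q: "Q \<in> dyadic d" and y: "y \<in> space M"
    and gb: "\<And>z. z \<in> space M \<Longrightarrow> cmod (g z) \<le> G" and G: "0 \<le> G"
  shows "ennreal (cmod (Lstar d s \<theta> \<epsilon> \<upsilon> (\<lambda>z. indicator Q z * g z * complex_of_real (w z)) y))
     \<le> ennreal G * infsum (\<lambda>Q'. (\<integral>\<^sup>+x\<in>Q'. ennreal (s Q' x y * (indicator Q x * w x)) \<partial>M) / ennreal (vol d Q')) (dyadic d)"
proof -
  define c where "c Q' = complex_of_real (1 / vol d Q') * (LINT x:Q'|M. complex_of_real (s Q' x y * indicator {z. \<epsilon> z \<le> dlen d Q' \<and> dlen d Q' \<le> \<upsilon> z} x)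
         * exp (- \<i> * complex_of_real (\<theta> x)) * (indicator Q x * g x * complex_of_real (w x)))" for Q'
  define tm where "tm Q' = (\<integral>\<^sup>+x\<in>Q'. ennreal (s Q' x y * (indicator Q x * w x)) \<partial>M) / ennreal (vol d Q')" for Q'
  have L: "Lstar d s \<theta> \<epsilon> \<upsilon> (\<lambda>z. indicator Q z * g z * complex_of_real (w z)) y = infsum c (dyadic d)"
    unfolding Lstar_def c_def by simp
  have per: "ennreal (cmod (c Q')) \<le> ennreal G * tm Q'" if Q': "Q' \<in> dyadic d" for Q'
  proof -
    define I where "I = (LINT x:Q'|M. complex_of_real (s Q' x y * indicator {z. \<epsilon> z \<le> dlen d Q' \<and> dlen d Q' \<le> \<upsilon> z} x)
         * exp (- \<i> * complex_of_real (\<theta> x)) * (indicator Q x * g x * complex_of_real (w x)))"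
    define J where "J = (\<integral>\<^sup>+x\<in>Q'. ennreal (s Q' x y * (indicator Q x * w x)) \<partial>M)"
    have [measurable]: "(\<lambda>x. s Q' x y) \<in> borel_measurable M" by (rule s_meas_x[OF Q' y])
    have [measurable]: "Q \<in> sets M" "Q' \<in> sets M" using Q Q' dyadic_sets by auto
    have IJ: "ennreal (cmod I) \<le> ennreal G * J"
    proof -
      have "ennreal (cmod I) \<le> (\<integral>\<^sup>+x. ennreal (cmod (indicator Q' x *\<^sub>R (complex_of_real (s Q' x y * indicator {z. \<epsilon> z \<le> dlen d Q' \<and> dlen d Q' \<le> \<upsilon> z} x)
         * exp (- \<i> * complex_of_real (\<theta> x)) * (indicator Q x * g x * complex_of_real (w x))))) \<partial>M)"
        (is "_ \<le> (\<integral>\<^sup>+x. ennreal (cmod (?f x)) \<partial>M)")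
      proof (cases "integrable M ?f")
        case True
        then show ?thesis unfolding I_def set_lebesgue_integral_def by (rule integral_norm_bound_ennreal)
      next
        case False
        then show ?thesis unfolding I_def set_lebesgue_integral_def by (simp add: not_integrable_integral_eq)
      qed
      also have "\<dots> \<le> (\<integral>\<^sup>+x. ennreal G * (ennreal (s Q' x y * (indicator Q x * w x)) * indicator Q' x) \<partial>M)"
      proof (rule nn_integral_mono)
        fix x assume x: "x \<in> space M"
        have e1: "cmod (exp (- \<i> * complex_of_real (\<theta> x))) = 1" by (simp add: norm_exp_eq_Re)
        have s0: "0 \<le> s Q' x y" by (rule s_nn[OF Q'])
        have w0: "0 \<le> w x" by (rule w_nn[OF x])
        have "cmod (?f x) = indicator Q' x * (s Q' x y * indicator {z. \<epsilon> z \<le> dlen d Q' \<and> dlen d Q' \<le> \<upsilon> z} x)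
            * (indicator Q x * cmod (g x) * w x)"
          using s0 w0 by (simp add: norm_mult e1 abs_mult split: split_indicator)
        also have "\<dots> \<le> indicator Q' x * s Q' x y * (indicator Q x * G * w x)"
          using s0 w0 gb[OF x] G by (auto simp: indicator_def intro!: mult_left_mono mult_right_mono mult_nonneg_nonneg)
        also have "\<dots> = G * (s Q' x y * (indicator Q x * w x) * indicator Q' x)" by (simp add: ac_simps)
        finally have "cmod (?f x) \<le> G * (s Q' x y * (indicator Q x * w x) * indicator Q' x)" .
        then have "ennreal (cmod (?f x)) \<le> ennreal (G * (s Q' x y * (indicator Q x * w x) * indicator Q' x))"
          by (rule ennreal_leI)
        also have "\<dots> = ennreal G * (ennreal (s Q' x y * (indicator Q x * w x)) * indicator Q' x)"
          using G s0 w0 by (simp add: ennreal_mult ennreal_indicator[symmetric] indicator_def)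
        finally show "ennreal (cmod (?f x)) \<le> ennreal G * (ennreal (s Q' x y * (indicator Q x * w x)) * indicator Q' x)" .
      qed
      also have "\<dots> = ennreal G * J" unfolding J_def by (rule nn_integral_cmult) measurable
      finally show ?thesis .
    qed
    show ?thesis
    proof (cases "vol d Q' = 0")
      case True then show ?thesis unfolding c_def by simp
    next
      case False
      then have vp: "0 < vol d Q'" using vol_nn[of Q'] by simp
      have "cmod (c Q') = cmod I / vol d Q'" unfolding c_def I_def[symmetric] using vp
        by (simp add: norm_mult norm_divide)
      then have "ennreal (cmod (c Q')) = ennreal (cmod I) / ennreal (vol d Q')" using vp
        by (simp add: divide_ennreal)
      also have "\<dots> \<le> (ennreal G * J) / ennreal (vol d Q')" by (rule divide_right_mono_ennreal[OF IJ])
      also have "\<dots> = ennreal G * tm Q'" unfolding tm_def J_def by (simp add: ennreal_times_divide)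
      finally show ?thesis .
    qed
  qed
  have "ennreal (cmod (infsum c (dyadic d))) \<le> infsum (\<lambda>Q'. ennreal (cmod (c Q'))) (dyadic d)"
    by (rule norm_infsum_ennreal)
  also have "\<dots> \<le> infsum (\<lambda>Q'. ennreal G * tm Q') (dyadic d)" by (rule infsum_mono_ennreal) (rule per)
  also have "\<dots> = ennreal G * infsum tm (dyadic d)" by (rule infsum_cmult_ennreal[OF countable_dyadic])
  finally show ?thesis unfolding L tm_def .
qed

lemma pointwise_B:
  assumes Q'd: "Q' \<in> dyadic d" and QQ0: "Q \<subseteq> Q0" and x: "x \<in> space M" and y: "y \<in> space M"
  shows "ennreal (s Q' x y * (indicator Q x * w x)) * indicator Q' x * (ennreal (\<sigma> y) * indicator Q y)
    \<le> ennreal (s Q' x y * (indicator Q0 y * \<sigma> y)) * indicator Q' y * (ennreal (w x) * indicator Q x)"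
proof (cases "y \<in> Q' \<and> x \<in> Q \<and> y \<in> Q")
  case False
  then have "y \<notin> Q' \<or> x \<notin> Q \<or> y \<notin> Q" by blast
  then show ?thesis by (elim disjE) (simp_all add: s_zero_y[OF Q'd])
next
  case True
  then have y0: "y \<in> Q0" using QQ0 by auto
  have s0: "0 \<le> s Q' x y" by (rule s_nn[OF Q'd])
  have "ennreal (s Q' x y * (indicator Q x * w x)) * indicator Q' x * (ennreal (\<sigma> y) * indicator Q y)
      = ennreal (s Q' x y) * ennreal (w x) * ennreal (\<sigma> y) * indicator Q' x"
    using True s0 w_nn[OF x] by (simp add: ennreal_mult ac_simps)
  also have "\<dots> \<le> ennreal (s Q' x y) * ennreal (w x) * ennreal (\<sigma> y)"
    by (simp add: indicator_def)
  also have "\<dots> = ennreal (s Q' x y * (indicator Q0 y * \<sigma> y)) * indicator Q' y * (ennreal (w x) * indicator Q x)"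
    using True y0 s0 sig_nn[OF y] by (simp add: ennreal_mult ac_simps)
  finally show ?thesis .
qed

lemma stepB:
  assumes Q: "Q \<in> dyadic d" and Q0: "Q0 \<in> dyadic d" and QQ0: "Q \<subseteq> Q0"
    and gb: "\<And>z. z \<in> space M \<Longrightarrow> cmod (g z) \<le> G" and G: "0 \<le> G"
  shows "(\<integral>\<^sup>+y\<in>Q. ennreal (cmod (Lstar d s \<theta> \<epsilon> \<upsilon> (\<lambda>z. indicator Q z * g z * complex_of_real (w z)) y)) * ennreal (\<sigma> y) \<partial>M)
     \<le> ennreal G * (\<integral>\<^sup>+x\<in>Q. Spos d s (\<lambda>y. indicator Q0 y * \<sigma> y) x * ennreal (w x) \<partial>M)"
proof -
  interpret sfM: sigma_finite_measure M by (rule sigma_finite_RdM)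
  interpret pair_sigma_finite M M unfolding pair_sigma_finite_def using sigma_finite_RdM by auto
  have [measurable]: "Q \<in> sets M" "Q0 \<in> sets M" using Q Q0 dyadic_sets by auto
  define A where "A Q' y = (\<integral>\<^sup>+x. ennreal (s Q' x y * (indicator Q x * w x)) * indicator Q' x \<partial>M)" for Q' y
  define B where "B Q' x = (\<integral>\<^sup>+y. ennreal (s Q' x y * (indicator Q0 y * \<sigma> y)) * indicator Q' y \<partial>M)" for Q' x
  define V where "V Q' = ennreal (vol d Q')" for Q'
  define T where "T y = infsum (\<lambda>Q'. A Q' y / V Q') (dyadic d)" for y
  have Am: "A Q' \<in> borel_measurable M" if Q': "Q' \<in> dyadic d" for Q'
  proof -
    have [measurable]: "(\<lambda>z. s Q' (snd z) (fst z)) \<in> borel_measurable (M \<Otimes>\<^sub>M M)" by (rule s_meas_swap[OF Q'])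
    have [measurable]: "Q' \<in> sets M" using Q' dyadic_sets by auto
    have "case_prod (\<lambda>y x. ennreal (s Q' x y * (indicator Q x * w x)) * indicator Q' x)
       = (\<lambda>z. ennreal (s Q' (snd z) (fst z) * (indicator Q (snd z) * w (snd z))) * indicator Q' (snd z))" by auto
    also have "\<dots> \<in> borel_measurable (M \<Otimes>\<^sub>M M)" by measurable
    finally show ?thesis unfolding A_def[abs_def] by (rule sfM.borel_measurable_nn_integral)
  qed
  have Bm: "B Q' \<in> borel_measurable M" if Q': "Q' \<in> dyadic d" for Q'
  proof -
    have [measurable]: "(\<lambda>z. s Q' (fst z) (snd z)) \<in> borel_measurable (M \<Otimes>\<^sub>M M)" by (rule s_meas[OF Q'])
    have [measurable]: "Q' \<in> sets M" using Q' dyadic_sets by auto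
    have "case_prod (\<lambda>x y. ennreal (s Q' x y * (indicator Q0 y * \<sigma> y)) * indicator Q' y)
       = (\<lambda>z. ennreal (s Q' (fst z) (snd z) * (indicator Q0 (snd z) * \<sigma> (snd z))) * indicator Q' (snd z))" by auto
    also have "\<dots> \<in> borel_measurable (M \<Otimes>\<^sub>M M)" by measurable
    finally show ?thesis unfolding B_def[abs_def] by (rule sfM.borel_measurable_nn_integral)
  qed
  have Vm[measurable]: "(\<lambda>x. V Q') \<in> borel_measurable M" for Q' by simp
  have Tm[measurable]: "T \<in> borel_measurable M"
    unfolding T_def[abs_def]
  proof (intro borel_measurable_infsum_ennreal[OF countable_dyadic])
    fix Q' assume "Q' \<in> dyadic d"
    then have [measurable]: "A Q' \<in> borel_measurable M" by (rule Am)
    have "(\<lambda>x. A Q' x * inverse (V Q')) \<in> borel_measurable M" by measurable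
    then show "(\<lambda>x. A Q' x / V Q') \<in> borel_measurable M" by (simp add: divide_ennreal_def)
  qed
  have Sp: "Spos d s (\<lambda>y. indicator Q0 y * \<sigma> y) x = infsum (\<lambda>Q'. B Q' x / V Q') (dyadic d)" for x
    unfolding Spos_def B_def V_def ..
  have "(\<integral>\<^sup>+y\<in>Q. ennreal (cmod (Lstar d s \<theta> \<epsilon> \<upsilon> (\<lambda>z. indicator Q z * g z * complex_of_real (w z)) y)) * ennreal (\<sigma> y) \<partial>M)
     \<le> (\<integral>\<^sup>+y. ennreal G * (T y * (ennreal (\<sigma> y) * indicator Q y)) \<partial>M)"
  proof (rule nn_integral_mono)
    fix y assume y: "y \<in> space M"
    have "ennreal (cmod (Lstar d s \<theta> \<epsilon> \<upsilon> (\<lambda>z. indicator Q z * g z * complex_of_real (w z)) y)) \<le> ennreal G * T y"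
      using stepA[OF Q y gb G] unfolding T_def A_def V_def .
    then show "ennreal (cmod (Lstar d s \<theta> \<epsilon> \<upsilon> (\<lambda>z. indicator Q z * g z * complex_of_real (w z)) y)) * ennreal (\<sigma> y) * indicator Q y
      \<le> ennreal G * (T y * (ennreal (\<sigma> y) * indicator Q y))"
      by (simp add: mult.assoc[symmetric] mult_right_mono)
  qed
  also have "\<dots> = ennreal G * (\<integral>\<^sup>+y. T y * (ennreal (\<sigma> y) * indicator Q y) \<partial>M)"
    by (rule nn_integral_cmult) measurable
  finally have C: "(\<integral>\<^sup>+y\<in>Q. ennreal (cmod (Lstar d s \<theta> \<epsilon> \<upsilon> (\<lambda>z. indicator Q z * g z * complex_of_real (w z)) y)) * ennreal (\<sigma> y) \<partial>M)
     \<le> ennreal G * (\<integral>\<^sup>+y. T y * (ennreal (\<sigma> y) * indicator Q y) \<partial>M)" .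
  have inner: "(\<integral>\<^sup>+y. T y * (ennreal (\<sigma> y) * indicator Q y) \<partial>M) \<le> (\<integral>\<^sup>+x. Spos d s (\<lambda>y. indicator Q0 y * \<sigma> y) x * (ennreal (w x) * indicator Q x) \<partial>M)"
  proof -
    have "(\<integral>\<^sup>+y. T y * (ennreal (\<sigma> y) * indicator Q y) \<partial>M)
        = (\<integral>\<^sup>+y. infsum (\<lambda>Q'. A Q' y / V Q' * (ennreal (\<sigma> y) * indicator Q y)) (dyadic d) \<partial>M)"
      unfolding T_def by (simp add: infsum_multc_ennreal[OF countable_dyadic])
    also have "\<dots> = infsum (\<lambda>Q'. \<integral>\<^sup>+y. A Q' y / V Q' * (ennreal (\<sigma> y) * indicator Q y) \<partial>M) (dyadic d)"
    proof (rule nn_integral_infsum[OF countable_dyadic])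
      fix Q' assume "Q' \<in> dyadic d"
      then have [measurable]: "A Q' \<in> borel_measurable M" by (rule Am)
      have "(\<lambda>y. A Q' y * inverse (V Q') * (ennreal (\<sigma> y) * indicator Q y)) \<in> borel_measurable M" by measurable
      then show "(\<lambda>y. A Q' y / V Q' * (ennreal (\<sigma> y) * indicator Q y)) \<in> borel_measurable M"
        by (simp add: divide_ennreal_def)
    qed
    also have "\<dots> \<le> infsum (\<lambda>Q'. \<integral>\<^sup>+x. B Q' x / V Q' * (ennreal (w x) * indicator Q x) \<partial>M) (dyadic d)"
    proof (rule infsum_mono_ennreal)
      fix Q' assume Q': "Q' \<in> dyadic d"
      have [measurable]: "Q' \<in> sets M" using Q' dyadic_sets by auto
      have [measurable]: "(\<lambda>z. s Q' (fst z) (snd z)) \<in> borel_measurable (M \<Otimes>\<^sub>M M)" by (rule s_meas[OF Q'])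
      have "(\<integral>\<^sup>+y. A Q' y / V Q' * (ennreal (\<sigma> y) * indicator Q y) \<partial>M)
        = (\<integral>\<^sup>+y. \<integral>\<^sup>+x. ennreal (s Q' x y * (indicator Q x * w x)) * indicator Q' x * (ennreal (\<sigma> y) * indicator Q y) / V Q' \<partial>M \<partial>M)"
      proof (intro nn_integral_cong)
        fix y assume y: "y \<in> space M"
        have [measurable]: "(\<lambda>x. s Q' x y) \<in> borel_measurable M" by (rule s_meas_x[OF Q' y])
        have "A Q' y / V Q' * (ennreal (\<sigma> y) * indicator Q y) = (A Q' y * (ennreal (\<sigma> y) * indicator Q y)) / V Q'"
          by (simp add: ennreal_divide_times ennreal_times_divide mult.commute)
        also have "A Q' y * (ennreal (\<sigma> y) * indicator Q y) = (\<integral>\<^sup>+x. ennreal (s Q' x y * (indicator Q x * w x)) * indicator Q' x * (ennreal (\<sigma> y) * indicator Q y) \<partial>M)"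
          unfolding A_def by (rule nn_integral_multc[symmetric]) measurable
        also have "\<dots> / V Q' = (\<integral>\<^sup>+x. ennreal (s Q' x y * (indicator Q x * w x)) * indicator Q' x * (ennreal (\<sigma> y) * indicator Q y) / V Q' \<partial>M)"
          by (rule nn_integral_divide[symmetric]) measurable
        finally show "A Q' y / V Q' * (ennreal (\<sigma> y) * indicator Q y) = (\<integral>\<^sup>+x. ennreal (s Q' x y * (indicator Q x * w x)) * indicator Q' x * (ennreal (\<sigma> y) * indicator Q y) / V Q' \<partial>M)" .
      qed
      also have "\<dots> = (\<integral>\<^sup>+x. \<integral>\<^sup>+y. ennreal (s Q' x y * (indicator Q x * w x)) * indicator Q' x * (ennreal (\<sigma> y) * indicator Q y) / V Q' \<partial>M \<partial>M)"
      proof (rule Fubini')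
        have "case_prod (\<lambda>x y. ennreal (s Q' x y * (indicator Q x * w x)) * indicator Q' x * (ennreal (\<sigma> y) * indicator Q y) / V Q')
          = (\<lambda>z. ennreal (s Q' (fst z) (snd z) * (indicator Q (fst z) * w (fst z))) * indicator Q' (fst z) * (ennreal (\<sigma> (snd z)) * indicator Q (snd z)) / V Q')"
          by auto
        also have "\<dots> \<in> borel_measurable (M \<Otimes>\<^sub>M M)" by measurable
        finally show "case_prod (\<lambda>x y. ennreal (s Q' x y * (indicator Q x * w x)) * indicator Q' x * (ennreal (\<sigma> y) * indicator Q y) / V Q') \<in> borel_measurable (M \<Otimes>\<^sub>M M)" .
      qed
      also have "\<dots> \<le> (\<integral>\<^sup>+x. \<integral>\<^sup>+y. ennreal (s Q' x y * (indicator Q0 y * \<sigma> y)) * indicator Q' y * (ennreal (w x) * indicator Q x) / V Q' \<partial>M \<partial>M)"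
        by (intro nn_integral_mono divide_right_mono_ennreal pointwise_B[OF Q' QQ0])
      also have "\<dots> = (\<integral>\<^sup>+x. B Q' x / V Q' * (ennreal (w x) * indicator Q x) \<partial>M)"
      proof (intro nn_integral_cong)
        fix x assume x: "x \<in> space M"
        have [measurable]: "(\<lambda>y. s Q' x y) \<in> borel_measurable M" by (rule s_meas_y[OF Q' x])
        have "(\<integral>\<^sup>+y. ennreal (s Q' x y * (indicator Q0 y * \<sigma> y)) * indicator Q' y * (ennreal (w x) * indicator Q x) / V Q' \<partial>M)
          = (\<integral>\<^sup>+y. ennreal (s Q' x y * (indicator Q0 y * \<sigma> y)) * indicator Q' y * (ennreal (w x) * indicator Q x) \<partial>M) / V Q'"
          by (rule nn_integral_divide) measurable
        also have "(\<integral>\<^sup>+y. ennreal (s Q' x y * (indicator Q0 y * \<sigma> y)) * indicator Q' y * (ennreal (w x) * indicator Q x) \<partial>M)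
          = B Q' x * (ennreal (w x) * indicator Q x)"
          unfolding B_def by (rule nn_integral_multc) measurable
        also have "B Q' x * (ennreal (w x) * indicator Q x) / V Q' = B Q' x / V Q' * (ennreal (w x) * indicator Q x)"
          by (simp add: ennreal_divide_times ennreal_times_divide mult.commute)
        finally show "(\<integral>\<^sup>+y. ennreal (s Q' x y * (indicator Q0 y * \<sigma> y)) * indicator Q' y * (ennreal (w x) * indicator Q x) / V Q' \<partial>M)
          = B Q' x / V Q' * (ennreal (w x) * indicator Q x)" .
      qed
      finally show "(\<integral>\<^sup>+y. A Q' y / V Q' * (ennreal (\<sigma> y) * indicator Q y) \<partial>M) \<le> (\<integral>\<^sup>+x. B Q' x / V Q' * (ennreal (w x) * indicator Q x) \<partial>M)" .
    qed
    also have "\<dots> = (\<integral>\<^sup>+x. infsum (\<lambda>Q'. B Q' x / V Q' * (ennreal (w x) * indicator Q x)) (dyadic d) \<partial>M)"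
    proof (rule nn_integral_infsum[symmetric, OF countable_dyadic])
      fix Q' assume "Q' \<in> dyadic d"
      then have [measurable]: "B Q' \<in> borel_measurable M" by (rule Bm)
      have "(\<lambda>x. B Q' x * inverse (V Q') * (ennreal (w x) * indicator Q x)) \<in> borel_measurable M" by measurable
      then show "(\<lambda>x. B Q' x / V Q' * (ennreal (w x) * indicator Q x)) \<in> borel_measurable M"
        by (simp add: divide_ennreal_def)
    qed
    also have "\<dots> = (\<integral>\<^sup>+x. Spos d s (\<lambda>y. indicator Q0 y * \<sigma> y) x * (ennreal (w x) * indicator Q x) \<partial>M)"
      unfolding Sp by (simp add: infsum_multc_ennreal[OF countable_dyadic])
    finally show ?thesis .
  qed
  have eqY: "(\<integral>\<^sup>+x. Spos d s (\<lambda>y. indicator Q0 y * \<sigma> y) x * (ennreal (w x) * indicator Q x) \<partial>M)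
     = (\<integral>\<^sup>+x\<in>Q. Spos d s (\<lambda>y. indicator Q0 y * \<sigma> y) x * ennreal (w x) \<partial>M)"
    by (intro nn_integral_cong) (simp add: ac_simps)
  show ?thesis using order_trans[OF C mult_left_mono[OF inner]] unfolding eqY by simp
qed

end


context shiftctx begin

lemma Spos_meas:
  assumes Q0: "Q0 \<in> dyadic d"
  shows "Spos d s (\<lambda>y. indicator Q0 y * \<sigma> y) \<in> borel_measurable M"
proof -
  interpret sfM: sigma_finite_measure M by (rule sigma_finite_RdM)
  have [measurable]: "Q0 \<in> sets M" using Q0 dyadic_sets by auto
  have "(\<lambda>x. infsum (\<lambda>Q'. (\<integral>\<^sup>+y\<in>Q'. ennreal (s Q' x y * (indicator Q0 y * \<sigma> y)) \<partial>M) / ennreal (vol d Q')) (dyadic d)) \<in> borel_measurable M"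
  proof (intro borel_measurable_infsum_ennreal[OF countable_dyadic])
    fix Q' assume Q': "Q' \<in> dyadic d"
    have [measurable]: "(\<lambda>z. s Q' (fst z) (snd z)) \<in> borel_measurable (M \<Otimes>\<^sub>M M)" by (rule s_meas[OF Q'])
    have [measurable]: "Q' \<in> sets M" using Q' dyadic_sets by auto
    have "case_prod (\<lambda>x y. ennreal (s Q' x y * (indicator Q0 y * \<sigma> y)) * indicator Q' y)
       = (\<lambda>z. ennreal (s Q' (fst z) (snd z) * (indicator Q0 (snd z) * \<sigma> (snd z))) * indicator Q' (snd z))" by auto
    also have "\<dots> \<in> borel_measurable (M \<Otimes>\<^sub>M M)" by measurable
    finally have [measurable]: "(\<lambda>x. \<integral>\<^sup>+y\<in>Q'. ennreal (s Q' x y * (indicator Q0 y * \<sigma> y)) \<partial>M) \<in> borel_measurable M"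
      by (rule sfM.borel_measurable_nn_integral)
    have "(\<lambda>x. (\<integral>\<^sup>+y\<in>Q'. ennreal (s Q' x y * (indicator Q0 y * \<sigma> y)) \<partial>M) * inverse (ennreal (vol d Q'))) \<in> borel_measurable M"
      by measurable
    then show "(\<lambda>x. (\<integral>\<^sup>+y\<in>Q'. ennreal (s Q' x y * (indicator Q0 y * \<sigma> y)) \<partial>M) / ennreal (vol d Q')) \<in> borel_measurable M"
      by (simp add: divide_ennreal_def)
  qed
  then show ?thesis unfolding Spos_def[abs_def] .
qed

lemma space_ne: "space M \<noteq> {}"
  unfolding space_RdM by (simp add: PiE_eq_empty_iff)

lemma key:
  assumes p: "1 < p"
    and A: "\<forall>Q\<in>dyadic d. epowr (\<integral>\<^sup>+ x\<in>Q. epowr (Spos d s (\<lambda>y. indicator Q y * \<sigma> y) x) p * ennreal (w x) \<partial>M) (1 / p)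
        \<le> A * epowr (wmeas d \<sigma> Q) (1 / p)"
    and lp: "linearization_params d \<theta> \<epsilon> \<upsilon>" and Q0: "Q0 \<in> dyadic d"
    and gm: "g \<in> borel_measurable M" and gbd: "bounded (g ` space M)"
  shows "epowr (\<integral>\<^sup>+ x\<in>Q0. epowr (Lmax d w \<sigma> s \<theta> \<epsilon> \<upsilon> g Q0 x) p * ennreal (w x) \<partial>M) (1 / p)
        \<le> ennreal ((2 * ((2 * (p / (p - 1))) powr p / p)) powr (1 / p)) * A * epowr (wmeas d \<sigma> Q0) (1 / p) * ennreal (SUP z\<in>space M. cmod (g z))"
proof -
  define G where "G = (SUP z\<in>space M. cmod (g z))"
  define Cp where "Cp = 2 * ((2 * (p / (p - 1))) powr p / p)"
  define F where "F = Spos d s (\<lambda>y. indicator Q0 y * \<sigma> y)"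
  define Qs where "Qs = {Q\<in>dyadic d. Q \<subseteq> Q0}"
  have Cp0: "0 \<le> Cp" unfolding Cp_def using p by simp
  obtain B where B: "\<And>z. z \<in> space M \<Longrightarrow> cmod (g z) \<le> B"
    using gbd unfolding bounded_iff by auto
  have gb: "cmod (g z) \<le> G" if "z \<in> space M" for z
    unfolding G_def by (rule cSUP_upper[OF that]) (use B in \<open>auto intro!: bdd_aboveI\<close>)
  obtain z0 where z0: "z0 \<in> space M" using space_ne by auto
  have G0: "0 \<le> G" using gb[OF z0] norm_ge_zero order_trans by blast
  have Fm[measurable]: "F \<in> borel_measurable M" unfolding F_def by (rule Spos_meas[OF Q0])
  have [measurable]: "Q0 \<in> sets M" using Q0 dyadic_sets by auto
  have dc: "doobctx M w F Qs Q0"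
  proof (rule doobctx.intro)
    show "sigma_finite_measure M" by (rule sigma_finite_RdM)
    show "countable Qs" unfolding Qs_def using countable_dyadic by (rule countable_subset[rotated]) auto
    show "\<And>Q. Q \<in> Qs \<Longrightarrow> Q \<in> sets M" unfolding Qs_def using dyadic_sets by auto
    show "w \<in> borel_measurable M" by simp
    show "\<And>x. x \<in> space M \<Longrightarrow> 0 \<le> w x" by (rule w_nn)
    show "\<And>Q1 Q2. Q1 \<in> Qs \<Longrightarrow> Q2 \<in> Qs \<Longrightarrow> Q1 \<inter> Q2 \<noteq> {} \<Longrightarrow> Q1 \<subseteq> Q2 \<or> Q2 \<subseteq> Q1"
      unfolding Qs_def using dyadic_nest by auto
    show "\<And>Q. Q \<in> Qs \<Longrightarrow> finite {Q' \<in> Qs. Q \<subseteq> Q'}"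
    proof -
      fix Q assume "Q \<in> Qs"
      then have "Q \<in> dyadic d" unfolding Qs_def by auto
      from ancestors_finite[OF d1 this Q0]
      show "finite {Q' \<in> Qs. Q \<subseteq> Q'}" unfolding Qs_def by (rule finite_subset[rotated]) auto
    qed
    show "Q0 \<in> sets M" by simp
    show "\<And>Q. Q \<in> Qs \<Longrightarrow> Q \<subseteq> Q0" unfolding Qs_def by auto
    show "wI M w Q0 < \<infinity>" unfolding wI_def by (rule weight_fin[OF ww Q0])
    show "F \<in> borel_measurable M" by simp
  qed
  interpret D: doobctx M w F Qs Q0 by (rule dc)
  have ptw: "Lmax d w \<sigma> s \<theta> \<epsilon> \<upsilon> g Q0 x \<le> ennreal G * dmax M w F Qs x" for x
  proof -
    have "Lmax d w \<sigma> s \<theta> \<epsilon> \<upsilon> g Q0 x \<le> (SUP Q\<in>Qs. ennreal G * (indicator Q x * avgw M w F Q))"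
      unfolding Lmax_def Qs_def[symmetric]
    proof (rule SUP_mono)
      fix Q assume Q: "Q \<in> Qs"
      then have Qd: "Q \<in> dyadic d" and QQ0: "Q \<subseteq> Q0" unfolding Qs_def by auto
      have J: "(\<integral>\<^sup>+y\<in>Q. ennreal (cmod (Lstar d s \<theta> \<epsilon> \<upsilon> (\<lambda>z. indicator Q z * g z * complex_of_real (w z)) y)) * ennreal (\<sigma> y) \<partial>M)
         \<le> ennreal G * fI M w F Q"
        unfolding fI_def F_def by (rule stepB[OF Qd Q0 QQ0 gb G0])
      have W: "wmeas d w Q = wI M w Q" unfolding wmeas_def wI_def ..
      have "indicator Q x * (if wmeas d w Q = 0 then 0 else
           (\<integral>\<^sup>+y\<in>Q. ennreal (cmod (Lstar d s \<theta> \<epsilon> \<upsilon> (\<lambda>z. indicator Q z * g z * complex_of_real (w z)) y)) * ennreal (\<sigma> y) \<partial>M) / wmeas d w Q)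
         \<le> ennreal G * (indicator Q x * avgw M w F Q)"
      proof (cases "wI M w Q = 0")
        case True then show ?thesis unfolding W by simp
      next
        case False
        have "(\<integral>\<^sup>+y\<in>Q. ennreal (cmod (Lstar d s \<theta> \<epsilon> \<upsilon> (\<lambda>z. indicator Q z * g z * complex_of_real (w z)) y)) * ennreal (\<sigma> y) \<partial>M) / wI M w Q
          \<le> ennreal G * fI M w F Q / wI M w Q" by (rule divide_right_mono_ennreal[OF J])
        then have h: "indicator Q x * ((\<integral>\<^sup>+y\<in>Q. ennreal (cmod (Lstar d s \<theta> \<epsilon> \<upsilon> (\<lambda>z. indicator Q z * g z * complex_of_real (w z)) y)) * ennreal (\<sigma> y) \<partial>M) / wI M w Q)
          \<le> indicator Q x * (ennreal G * fI M w F Q / wI M w Q)" by (rule mult_left_mono) simp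
        have e: "indicator Q x * (ennreal G * fI M w F Q / wI M w Q) = ennreal G * (indicator Q x * (fI M w F Q / wI M w Q))"
          by (simp add: ennreal_times_divide ac_simps)
        show ?thesis unfolding W avgw_def using False h e by simp
      qed
      then show "\<exists>m\<in>Qs. indicator Q x * (if wmeas d w Q = 0 then 0 else
           (\<integral>\<^sup>+y\<in>Q. ennreal (cmod (Lstar d s \<theta> \<epsilon> \<upsilon> (\<lambda>z. indicator Q z * g z * complex_of_real (w z)) y)) * ennreal (\<sigma> y) \<partial>M) / wmeas d w Q)
         \<le> ennreal G * (indicator m x * avgw M w F m)" using Q by blast
    qed
    also have "\<dots> = ennreal G * dmax M w F Qs x" unfolding dmax_def by (simp add: SUP_mult_left_ennreal)
    finally show ?thesis .
  qed
  have p0: "0 < p" using p by simp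
  have pt: "epowr (Lmax d w \<sigma> s \<theta> \<epsilon> \<upsilon> g Q0 x) p * ennreal (w x) * indicator Q0 x
      \<le> ennreal (G powr p) * (epowr (dmax M w F Qs x) p * ennreal (w x)) * indicator Q0 x" for x
  proof -
    have "epowr (Lmax d w \<sigma> s \<theta> \<epsilon> \<upsilon> g Q0 x) p \<le> epowr (ennreal G * dmax M w F Qs x) p"
      by (rule epowr_mono[OF ptw p0])
    also have "\<dots> = ennreal (G powr p) * epowr (dmax M w F Qs x) p"
      using G0 p0 by (simp add: epowr_mult epowr_ennreal)
    finally have "epowr (Lmax d w \<sigma> s \<theta> \<epsilon> \<upsilon> g Q0 x) p * ennreal (w x) * indicator Q0 x
      \<le> ennreal (G powr p) * epowr (dmax M w F Qs x) p * ennreal (w x) * indicator Q0 x"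
      by (intro mult_right_mono) auto
    then show ?thesis by (simp add: mult.assoc)
  qed
  have "epowr (\<integral>\<^sup>+ x\<in>Q0. epowr (Lmax d w \<sigma> s \<theta> \<epsilon> \<upsilon> g Q0 x) p * ennreal (w x) \<partial>M) (1 / p)
     \<le> epowr (\<integral>\<^sup>+ x\<in>Q0. ennreal (G powr p) * (epowr (dmax M w F Qs x) p * ennreal (w x)) \<partial>M) (1 / p)"
    by (rule epowr_mono[OF nn_integral_mono[OF pt]]) (use p in simp)
  also have "(\<integral>\<^sup>+ x\<in>Q0. ennreal (G powr p) * (epowr (dmax M w F Qs x) p * ennreal (w x)) \<partial>M)
      = ennreal (G powr p) * (\<integral>\<^sup>+ x\<in>Q0. epowr (dmax M w F Qs x) p * ennreal (w x) \<partial>M)"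
    by (subst nn_integral_cmult[symmetric]) (measurable, simp add: mult.assoc)
  finally have st1: "epowr (\<integral>\<^sup>+ x\<in>Q0. epowr (Lmax d w \<sigma> s \<theta> \<epsilon> \<upsilon> g Q0 x) p * ennreal (w x) \<partial>M) (1 / p)
     \<le> epowr (ennreal (G powr p) * (\<integral>\<^sup>+ x\<in>Q0. epowr (dmax M w F Qs x) p * ennreal (w x) \<partial>M)) (1 / p)" .
  note st1
  also have "epowr (ennreal (G powr p) * (\<integral>\<^sup>+ x\<in>Q0. epowr (dmax M w F Qs x) p * ennreal (w x) \<partial>M)) (1 / p)
     \<le> epowr (ennreal (G powr p) * (ennreal Cp * (\<integral>\<^sup>+x\<in>Q0. epowr (F x) p * ennreal (w x) \<partial>M))) (1 / p)"
    using D.doob[OF p] p0 unfolding Cp_def by (intro epowr_mono mult_left_mono) auto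
  also have "\<dots> = ennreal G * ennreal (Cp powr (1 / p)) * epowr (\<integral>\<^sup>+x\<in>Q0. epowr (F x) p * ennreal (w x) \<partial>M) (1 / p)"
  proof -
    have "(G powr p) powr (1 / p) = G" using G0 p0 by (simp add: powr_powr)
    then show ?thesis using p0 G0 Cp0 by (simp add: epowr_mult epowr_ennreal mult.assoc)
  qed
  also have "\<dots> \<le> ennreal G * ennreal (Cp powr (1 / p)) * (A * epowr (wmeas d \<sigma> Q0) (1 / p))"
    using A Q0 unfolding F_def by (intro mult_left_mono) auto
  finally show ?thesis unfolding G_def Cp_def by (simp add: ac_simps)
qed

end


theorem lemma3p3:
  fixes p :: real
  assumes "1 < p"
  shows "\<exists>C>0. \<forall>d \<ge> 1. \<forall>w \<sigma> m n h k.
           weight d w \<and> weight d \<sigma> \<and> pos_haar_shift d m n h k \<longrightarrow>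
           max_const d p w \<sigma> (skernel d m n h k) \<le> ennreal C * test_const d p w \<sigma> (skernel d m n h k)"
proof -
  define C where "C = (2 * ((2 * (p / (p - 1))) powr p / p)) powr (1 / p)"
  have C0: "0 < C" unfolding C_def using assms by simp
  show ?thesis
  proof (intro exI[of _ C] conjI allI impI C0)
    fix d :: nat and w \<sigma> :: "pt \<Rightarrow> real" and m n :: nat and h k :: "pt set \<Rightarrow> pt set \<Rightarrow> pt set \<Rightarrow> pt \<Rightarrow> real"
    assume d: "1 \<le> d" and H: "weight d w \<and> weight d \<sigma> \<and> pos_haar_shift d m n h k"
    interpret shiftctx d m n h k w \<sigma> using d H by unfold_locales auto
    define TS where "TS = {A. \<forall>Q\<in>dyadic d.
      epowr (\<integral>\<^sup>+ x\<in>Q. epowr (Spos d s (\<lambda>y. indicator Q y * \<sigma> y) x) p * ennreal (w x) \<partial>RdM d) (1 / p)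
        \<le> A * epowr (wmeas d \<sigma> Q) (1 / p)}"
    define MS where "MS = {A. \<forall>\<theta> \<epsilon> \<upsilon> g Q0.
      linearization_params d \<theta> \<epsilon> \<upsilon> \<and> Q0 \<in> dyadic d
      \<and> g \<in> borel_measurable (RdM d) \<and> bounded (g ` space (RdM d)) \<longrightarrow>
      epowr (\<integral>\<^sup>+ x\<in>Q0. epowr (Lmax d w \<sigma> s \<theta> \<epsilon> \<upsilon> g Q0 x) p * ennreal (w x) \<partial>RdM d) (1 / p)
        \<le> A * epowr (wmeas d \<sigma> Q0) (1 / p) * ennreal (SUP z\<in>space (RdM d). cmod (g z))}"
    have tc: "test_const d p w \<sigma> s = Inf TS" unfolding test_const_def TS_def ..
    have mc: "max_const d p w \<sigma> s = Inf MS" unfolding max_const_def MS_def ..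
    have inMS: "ennreal C * A \<in> MS" if A: "A \<in> TS" for A
      unfolding MS_def
    proof (intro CollectI allI impI, elim conjE)
      fix \<theta> \<epsilon> \<upsilon> :: "pt \<Rightarrow> real" and g :: "pt \<Rightarrow> complex" and Q0
      assume lp: "linearization_params d \<theta> \<epsilon> \<upsilon>" and Q0: "Q0 \<in> dyadic d"
        and gm: "g \<in> borel_measurable (RdM d)" and gbd: "bounded (g ` space (RdM d))"
      show "epowr (\<integral>\<^sup>+ x\<in>Q0. epowr (Lmax d w \<sigma> s \<theta> \<epsilon> \<upsilon> g Q0 x) p * ennreal (w x) \<partial>RdM d) (1 / p)
        \<le> ennreal C * A * epowr (wmeas d \<sigma> Q0) (1 / p) * ennreal (SUP z\<in>space (RdM d). cmod (g z))"
        using key[OF assms _ lp Q0 gm gbd] A unfolding TS_def C_def by blast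
    qed
    define c where "c = ennreal C"
    define ci where "ci = ennreal (1 / C)"
    have cci: "c * ci = 1" unfolding c_def ci_def using C0
      by (simp add: ennreal_mult[symmetric])
    have "ci * Inf MS \<le> Inf TS"
    proof (rule Inf_greatest)
      fix A assume "A \<in> TS"
      then have "Inf MS \<le> c * A" unfolding c_def by (intro Inf_lower inMS)
      then have "ci * Inf MS \<le> ci * (c * A)" by (rule mult_left_mono) simp
      also have "\<dots> = (ci * c) * A" by (simp add: mult.assoc)
      also have "ci * c = 1" using cci by (simp add: mult.commute)
      finally show "ci * Inf MS \<le> A" by simp
    qed
    then have "c * (ci * Inf MS) \<le> c * Inf TS" by (rule mult_left_mono) simp
    then have "Inf MS \<le> c * Inf TS" using cci by (simp add: mult.assoc[symmetric])
    then show "max_const d p w \<sigma> (skernel d m n h k) \<le> ennreal C * test_const d p w \<sigma> (skernel d m n h k)"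
      unfolding mc tc c_def .
  qed
qed


end
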